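(* Let $G$ be a nilpotent Chernikov $p$-group whose top is an elementary abelian $p$-group and whose bottom is a single quasi-cyclic $p$-group $M$. Then $G\cong G_k\times H_l$ for some integers $k,l\ge0$, where $H_l$ is the elementary abelian $p$-group of rank $l$ and $G_k$ is the group generated by $M$ and $2k$ elements $\bar h_1,\dots,\bar h_{2k}$, each of order $p$ and commuting with all elements of $M$, whose commutators for $i<j$ are $[\bar h_i,\bar h_j]=a_1$ if $j=k+i$ and $[\bar h_i,\bar h_j]=0$ otherwise, $a_1$ being a fixed element of order $p$ of $M$.
   Context: A Chernikov $p$-group is an extension of a finite direct sum of quasi-cyclic $p$-groups (groups of type $p^\infty$; the bottom, which is the largest divisible abelian subgroup) by a finite $p$-group (the top). Groups are written additively and $[u,v]=u+v-u-v$. *)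

theory Defs
  imports Complex_Main "HOL-Algebra.Algebra"
begin

text \<open>Commutator, in the paper's convention [u,v] = u+v-u-v, written multiplicatively.\<close>
definition commutator :: "('a, 'b) monoid_scheme \<Rightarrow> 'a \<Rightarrow> 'a \<Rightarrow> 'a" where
  "commutator G u v = u \<otimes>\<^bsub>G\<^esub> v \<otimes>\<^bsub>G\<^esub> inv\<^bsub>G\<^esub> u \<otimes>\<^bsub>G\<^esub> inv\<^bsub>G\<^esub> v"

fun lower_central :: "('a, 'b) monoid_scheme \<Rightarrow> nat \<Rightarrow> 'a set" where
  "lower_central G 0 = carrier G"
| "lower_central G (Suc n) =
     generate G {commutator G x y | x y. x \<in> lower_central G n \<and> y \<in> carrier G}"

definition nilpotent_group :: "('a, 'b) monoid_scheme \<Rightarrow> bool" where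
  "nilpotent_group G \<longleftrightarrow> group G \<and> (\<exists>n. lower_central G n = {\<one>\<^bsub>G\<^esub>})"

definition prufer_group :: "nat \<Rightarrow> complex monoid" where
  "prufer_group p = \<lparr>carrier = {z. \<exists>n. z ^ (p ^ n) = 1}, monoid.mult = (*), one = 1\<rparr>"

definition quasi_cyclic_subgroup :: "nat \<Rightarrow> ('a, 'b) monoid_scheme \<Rightarrow> 'a set \<Rightarrow> bool" where
  "quasi_cyclic_subgroup p G M \<longleftrightarrow> subgroup M G \<and> G\<lparr>carrier := M\<rparr> \<cong> prufer_group p"

definition divisible_abelian_subgroup :: "('a, 'b) monoid_scheme \<Rightarrow> 'a set \<Rightarrow> bool" where
  "divisible_abelian_subgroup G D \<longleftrightarrow> subgroup D G
     \<and> (\<forall>x\<in>D. \<forall>y\<in>D. x \<otimes>\<^bsub>G\<^esub> y = y \<otimes>\<^bsub>G\<^esub> x)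
     \<and> (\<forall>x\<in>D. \<forall>n::nat. n > 0 \<longrightarrow> (\<exists>y\<in>D. y [^]\<^bsub>G\<^esub> n = x))"

definition is_bottom :: "('a, 'b) monoid_scheme \<Rightarrow> 'a set \<Rightarrow> bool" where
  "is_bottom G M \<longleftrightarrow> divisible_abelian_subgroup G M
     \<and> (\<forall>D. divisible_abelian_subgroup G D \<longrightarrow> D \<subseteq> M)"

definition elementary_abelian :: "nat \<Rightarrow> ('a, 'b) monoid_scheme \<Rightarrow> bool" where
  "elementary_abelian p H \<longleftrightarrow> comm_group H \<and> finite (carrier H)
     \<and> (\<forall>x\<in>carrier H. x [^]\<^bsub>H\<^esub> p = \<one>\<^bsub>H\<^esub>)"

definition elementary_abelian_rank :: "nat \<Rightarrow> nat \<Rightarrow> ('a, 'b) monoid_scheme \<Rightarrow> bool" where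
  "elementary_abelian_rank p l H \<longleftrightarrow> elementary_abelian p H \<and> card (carrier H) = p ^ l"

definition is_G_k :: "nat \<Rightarrow> nat \<Rightarrow> ('a, 'b) monoid_scheme \<Rightarrow> bool" where
  "is_G_k p k K \<longleftrightarrow> group K \<and> (\<exists>M h a.
      quasi_cyclic_subgroup p K M
    \<and> a \<in> M \<and> group.ord K a = p
    \<and> (\<forall>i\<in>{1..2*k}. h i \<in> carrier K \<and> group.ord K (h i) = p
                       \<and> (\<forall>m\<in>M. h i \<otimes>\<^bsub>K\<^esub> m = m \<otimes>\<^bsub>K\<^esub> h i))
    \<and> (\<forall>i\<in>{1..2*k}. \<forall>j\<in>{1..2*k}. i < j \<longrightarrow>
          commutator K (h i) (h j) = (if j = k + i then a else \<one>\<^bsub>K\<^esub>))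
    \<and> carrier K = generate K (M \<union> h ` {1..2*k}))"

end

theory Submission
  imports Defs
begin


definition centr :: "('a, 'b) monoid_scheme \<Rightarrow> 'a set \<Rightarrow> 'a set" where
  "centr H Y = {g. g \<in> carrier H \<and> (\<forall>y\<in>Y. g \<otimes>\<^bsub>H\<^esub> y = y \<otimes>\<^bsub>H\<^esub> g)}"

context group begin

lemma inv_cancel_l1[simp]: "y \<in> carrier G \<Longrightarrow> z \<in> carrier G \<Longrightarrow> inv y \<otimes> (y \<otimes> z) = z"
  by (simp add: m_assoc[symmetric])
lemma inv_cancel_l2[simp]: "y \<in> carrier G \<Longrightarrow> z \<in> carrier G \<Longrightarrow> y \<otimes> (inv y \<otimes> z) = z"
  by (simp add: m_assoc[symmetric])

lemma gen_gen_un: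
  assumes A: "A \<subseteq> carrier G" and B: "B \<subseteq> carrier G"
  shows "generate G (generate G A \<union> B) = generate G (A \<union> B)"
proof
  have AB: "A \<union> B \<subseteq> carrier G" using A B by (rule Un_least)
  have sub: "subgroup (generate G (A \<union> B)) G" by (rule generate_is_subgroup[OF AB])
  have "generate G A \<subseteq> generate G (A \<union> B)" by (rule mono_generate) (rule Un_upper1)
  moreover have "B \<subseteq> generate G (A \<union> B)" by (auto intro: generate.incl)
  ultimately have "generate G A \<union> B \<subseteq> generate G (A \<union> B)" by (rule Un_least)
  then show "generate G (generate G A \<union> B) \<subseteq> generate G (A \<union> B)"
    by (rule generate_subgroup_incl[OF _ sub])
next
  have gA: "generate G A \<subseteq> carrier G" using subgroup.subset[OF generate_is_subgroup[OF A]] .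
  have sub: "subgroup (generate G (generate G A \<union> B)) G"
    using gA B by (intro generate_is_subgroup) (rule Un_least)
  have "A \<subseteq> generate G A" by (auto intro: generate.incl)
  then have "A \<union> B \<subseteq> generate G A \<union> B" by blast
  also have "\<dots> \<subseteq> generate G (generate G A \<union> B)" by (auto intro: generate.incl)
  finally show "generate G (A \<union> B) \<subseteq> generate G (generate G A \<union> B)"
    by (rule generate_subgroup_incl[OF _ sub])
qed

lemma gen_subgroup: "subgroup S G \<Longrightarrow> generate G S = S"
  using generate_subgroup_incl[of S S] by (auto intro: generate.incl)

lemma centr_subgroup: assumes Y: "Y \<subseteq> carrier G" shows "subgroup (centr G Y) G"
proof (rule subgroupI)
  show "centr G Y \<subseteq> carrier G" unfolding centr_def by blast
  show "centr G Y \<noteq> {}" unfolding centr_def using Y by (auto intro!: exI[of _ \<one>])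
next
  fix a assume a: "a \<in> centr G Y"
  have ac: "a \<in> carrier G" using a unfolding centr_def by blast
  have "inv a \<otimes> y = y \<otimes> inv a" if y: "y \<in> Y" for y
  proof -
    have yc: "y \<in> carrier G" using y Y by blast
    have e: "a \<otimes> y = y \<otimes> a" using a y unfolding centr_def by blast
    have "inv a \<otimes> y = inv a \<otimes> (y \<otimes> a) \<otimes> inv a" using ac yc by (simp add: m_assoc)
    also have "\<dots> = inv a \<otimes> (a \<otimes> y) \<otimes> inv a" by (simp only: e)
    also have "\<dots> = y \<otimes> inv a" using ac yc by (simp add: m_assoc[symmetric])
    finally show ?thesis .
  qed
  then show "inv a \<in> centr G Y" using ac unfolding centr_def by blast
next
  fix a b assume a: "a \<in> centr G Y" and b: "b \<in> centr G Y"
  have ac: "a \<in> carrier G" "b \<in> carrier G" using a b unfolding centr_def by blast+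
  have "a \<otimes> b \<otimes> y = y \<otimes> (a \<otimes> b)" if y: "y \<in> Y" for y
  proof -
    have yc: "y \<in> carrier G" using y Y by blast
    have e: "a \<otimes> y = y \<otimes> a" "b \<otimes> y = y \<otimes> b" using a b y unfolding centr_def by blast+
    have "a \<otimes> b \<otimes> y = a \<otimes> (b \<otimes> y)" using ac yc by (simp add: m_assoc)
    also have "\<dots> = (a \<otimes> y) \<otimes> b" by (simp only: e(2)) (simp add: m_assoc ac yc)
    also have "\<dots> = y \<otimes> (a \<otimes> b)" using ac yc by (subst e(1)) (simp add: m_assoc)
    finally show ?thesis .
  qed
  then show "a \<otimes> b \<in> centr G Y" using ac unfolding centr_def by blast
qed

lemma comm_gen:
  assumes "c \<in> carrier G" "Y \<subseteq> carrier G" "\<forall>x\<in>Y. c \<otimes> x = x \<otimes> c" "y \<in> generate G Y"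
  shows "c \<otimes> y = y \<otimes> c"
proof -
  have "subgroup (centr G {c}) G" using assms by (intro centr_subgroup) auto
  moreover have "Y \<subseteq> centr G {c}" using assms unfolding centr_def by auto
  ultimately have "generate G Y \<subseteq> centr G {c}" using generate_subgroup_incl by blast
  then show ?thesis using assms unfolding centr_def by auto
qed

lemma sub_pow_closed: "subgroup S G \<Longrightarrow> x \<in> S \<Longrightarrow> x [^] (n::nat) \<in> S"
  by (induct n) (auto simp: subgroup.one_closed subgroup.m_closed)

lemma pow_in_sub:
  assumes S: "subgroup S G" and x: "x \<in> carrier G" and n: "Factorial_Ring.prime (n::nat)" and xn: "x [^] n \<in> S"
    and xj: "x [^] j \<in> S" and j: "0 < (j::nat)" "j < n"
  shows "x \<in> S"
proof -
  have "\<not> n dvd j" using j by (metis dvd_imp_le not_le)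
  then have "coprime n j" using n by (intro prime_imp_coprime)
  then have "coprime j n" by (simp add: coprime_commute)
  then have g: "gcd j n = 1" by simp
  obtain u v where uv: "j * u = n * v + gcd j n" using bezout_nat[of j n] j by auto
  then have uv1: "j * u = n * v + 1" using g by simp
  have "(x [^] j) [^] u = x [^] (n * v + 1)"
    using x by (simp add: nat_pow_pow uv1)
  also have "\<dots> = x [^] (n * v) \<otimes> x [^] (1::nat)" using x by (simp only: nat_pow_mult)
  also have "\<dots> = (x [^] n) [^] v \<otimes> x" using x by (simp add: nat_pow_pow)
  finally have "(x [^] j) [^] u = (x [^] n) [^] v \<otimes> x" .
  then have eqx: "x = inv ((x [^] n) [^] v) \<otimes> (x [^] j) [^] u"
    using x by (simp add: m_assoc[symmetric])
  have "inv ((x [^] n) [^] v) \<in> S"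
    by (rule subgroup.m_inv_closed[OF S sub_pow_closed[OF S xn]])
  moreover have "(x [^] j) [^] u \<in> S" by (rule sub_pow_closed[OF S xj])
  ultimately have m: "inv ((x [^] n) [^] v) \<otimes> (x [^] j) [^] u \<in> S" by (rule subgroup.m_closed[OF S])
  show ?thesis using m by (subst eqx)
qed

lemma conj_pow:
  assumes S: "subgroup S G" and x: "x \<in> carrier G"
    and nx: "\<forall>s\<in>S. x \<otimes> s \<otimes> inv x \<in> S \<and> inv x \<otimes> s \<otimes> x \<in> S"
  shows "s \<in> S \<Longrightarrow> x [^] (i::nat) \<otimes> s \<otimes> inv (x [^] i) \<in> S \<and> inv (x [^] i) \<otimes> s \<otimes> x [^] i \<in> S"
proof (induct i arbitrary: s)
  case 0
  have sc: "s \<in> carrier G" by (rule subgroup.mem_carrier[OF S 0])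
  show ?case using 0 sc by simp
next
  case (Suc i)
  have sc: "s \<in> carrier G" by (rule subgroup.mem_carrier[OF S Suc.prems])
  have xi: "x [^] i \<in> carrier G" using x by simp
  have e1: "x [^] Suc i \<otimes> s \<otimes> inv (x [^] Suc i) = x [^] i \<otimes> (x \<otimes> s \<otimes> inv x) \<otimes> inv (x [^] i)"
    using x sc xi by (simp only: nat_pow_Suc inv_mult_group m_assoc m_closed inv_closed)
  have e2: "inv (x [^] Suc i) \<otimes> s \<otimes> x [^] Suc i = inv x \<otimes> (inv (x [^] i) \<otimes> s \<otimes> x [^] i) \<otimes> x"
    using x sc xi by (simp only: nat_pow_Suc inv_mult_group m_assoc m_closed inv_closed)
  have h1: "x \<otimes> s \<otimes> inv x \<in> S" using bspec[OF nx Suc.prems] by (rule conjunct1)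
  have h2: "inv (x [^] i) \<otimes> s \<otimes> x [^] i \<in> S" using Suc.hyps[OF Suc.prems] by (rule conjunct2)
  have "x [^] i \<otimes> (x \<otimes> s \<otimes> inv x) \<otimes> inv (x [^] i) \<in> S"
    using Suc.hyps[OF h1] by (rule conjunct1)
  moreover have "inv x \<otimes> (inv (x [^] i) \<otimes> s \<otimes> x [^] i) \<otimes> x \<in> S"
    using bspec[OF nx h2] by (rule conjunct2)
  ultimately show ?case unfolding e1 e2 by (rule conjI)
qed

lemma ext_gen:
  assumes S: "subgroup S G" and x: "x \<in> carrier G" and n: "1 < (n::nat)" and xn: "x [^] n \<in> S"
    and nx: "\<forall>s\<in>S. x \<otimes> s \<otimes> inv x \<in> S \<and> inv x \<otimes> s \<otimes> x \<in> S"
  shows "generate G (S \<union> {x}) = {s \<otimes> x [^] j | s j. s \<in> S \<and> j < n}"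
proof -
  let ?E = "{s \<otimes> x [^] j | s j. s \<in> S \<and> j < n}"
  have Sc: "\<And>s. s \<in> S \<Longrightarrow> s \<in> carrier G" by (rule subgroup.mem_carrier[OF S])
  note cp = conj_pow[OF S x nx]
  have subE: "subgroup ?E G"
  proof (rule subgroupI)
    show "?E \<subseteq> carrier G" using Sc x by auto
    show "?E \<noteq> {}" using S n subgroup.one_closed by fastforce
  next
    fix a assume "a \<in> ?E"
    then obtain s i where a: "a = s \<otimes> x [^] i" "s \<in> S" "i < n" by auto
    show "inv a \<in> ?E"
    proof (cases "i = 0")
      case True then show ?thesis using a S n Sc by (auto intro!: exI[of _ "inv s"] exI[of _ 0] subgroup.m_inv_closed)
    next
      case False
      have sc: "s \<in> carrier G" using a Sc by auto
      have "x [^] (n - i) \<otimes> x [^] i = x [^] n" using x a by (simp add: nat_pow_mult)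
      then have ii: "inv (x [^] i) = inv (x [^] n) \<otimes> x [^] (n - i)"
        using x by (metis inv_solve_left' inv_solve_right' m_closed nat_pow_closed inv_closed)
      have "inv a = inv (x [^] i) \<otimes> inv s" using a sc x by (simp add: inv_mult_group)
      also have "\<dots> = (inv (x [^] n) \<otimes> (x [^] (n - i) \<otimes> inv s \<otimes> inv (x [^] (n - i)))) \<otimes> x [^] (n - i)"
        using x sc by (simp add: ii m_assoc)
      finally have "inv a = (inv (x [^] n) \<otimes> (x [^] (n - i) \<otimes> inv s \<otimes> inv (x [^] (n - i)))) \<otimes> x [^] (n - i)" .
      moreover have "inv (x [^] n) \<otimes> (x [^] (n - i) \<otimes> inv s \<otimes> inv (x [^] (n - i))) \<in> S"
        using conjunct1[OF cp[OF subgroup.m_inv_closed[OF S a(2)], of "n - i"]]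
          subgroup.m_inv_closed[OF S xn] by (rule subgroup.m_closed[OF S, rotated])
      moreover have "n - i < n" using False a by auto
      ultimately show ?thesis by blast
    qed
  next
    fix a b assume "a \<in> ?E" "b \<in> ?E"
    then obtain s i t j where ab: "a = s \<otimes> x [^] i" "s \<in> S" "i < n" "b = t \<otimes> x [^] j" "t \<in> S" "j < n" by auto
    have sc: "s \<in> carrier G" "t \<in> carrier G" using ab Sc by auto
    define q r where "q = (i + j) div n" and "r = (i + j) mod n"
    have ijqr: "i + j = n * q + r" unfolding q_def r_def by simp
    have "a \<otimes> b = s \<otimes> (x [^] i \<otimes> t \<otimes> inv (x [^] i)) \<otimes> (x [^] i \<otimes> x [^] j)"
      using sc x ab by (simp add: m_assoc)
    also have "x [^] i \<otimes> x [^] j = (x [^] n) [^] q \<otimes> x [^] r"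
      using x by (simp add: nat_pow_mult nat_pow_pow ijqr)
    finally have "a \<otimes> b = (s \<otimes> (x [^] i \<otimes> t \<otimes> inv (x [^] i)) \<otimes> (x [^] n) [^] q) \<otimes> x [^] r"
      using sc x by (simp add: m_assoc)
    moreover have "s \<otimes> (x [^] i \<otimes> t \<otimes> inv (x [^] i)) \<otimes> (x [^] n) [^] q \<in> S"
      using subgroup.m_closed[OF S subgroup.m_closed[OF S ab(2) conjunct1[OF cp[OF ab(5)]]] sub_pow_closed[OF S xn]] .
    moreover have "r < n" unfolding r_def using n by simp
    ultimately show "a \<otimes> b \<in> ?E" by blast
  qed
  show ?thesis
  proof (rule generateI[symmetric, OF subE])
    show "S \<union> {x} \<subseteq> ?E"
    proof
      fix y assume "y \<in> S \<union> {x}"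
      then show "y \<in> ?E"
      proof
        assume "y \<in> S" then show ?thesis using Sc n by (auto intro!: exI[of _ y] exI[of _ 0])
      next
        assume "y \<in> {x}" then show ?thesis using x n S subgroup.one_closed
          by (auto intro!: exI[of _ "\<one>"] exI[of _ 1])
      qed
    qed
  next
    fix K assume K: "subgroup K G" "S \<union> {x} \<subseteq> K"
    show "?E \<subseteq> K" using K sub_pow_closed subgroup.m_closed by fastforce
  qed
qed

lemma ext_unique:
  assumes S: "subgroup S G" and x: "x \<in> carrier G" and n: "Factorial_Ring.prime (n::nat)" and xn: "x [^] n \<in> S"
    and xS: "x \<notin> S" and st: "s \<in> S" "t \<in> S" and ij: "i < n" "j < n"
    and eq: "s \<otimes> x [^] i = t \<otimes> x [^] j"
  shows "i = j \<and> s = t"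
proof -
  have Sc: "s \<in> carrier G" "t \<in> carrier G" using subgroup.mem_carrier[OF S] st by auto
  have key: "i = j" if le: "i \<le> j" and eq: "s \<otimes> x [^] i = t \<otimes> x [^] j" and st: "s \<in> S" "t \<in> S" "i < n" "j < n"
    for s t i j
  proof (rule ccontr)
    assume "i \<noteq> j"
    have Sc: "s \<in> carrier G" "t \<in> carrier G" using subgroup.mem_carrier[OF S] st by auto
    have "x [^] j = x [^] (j - i) \<otimes> x [^] i" using le x by (simp add: nat_pow_mult)
    then have "s \<otimes> x [^] i = (t \<otimes> x [^] (j - i)) \<otimes> x [^] i" using eq x Sc by (simp add: m_assoc)
    then have "s = t \<otimes> x [^] (j - i)" using x Sc by (metis m_closed nat_pow_closed r_cancel)
    then have "x [^] (j - i) = inv t \<otimes> s" using x Sc by (simp add: m_assoc[symmetric])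
    then have "x [^] (j - i) \<in> S" using S st by (metis subgroup.m_closed subgroup.m_inv_closed)
    then have "x \<in> S" using pow_in_sub[OF S x n xn, of "j - i"] le \<open>i \<noteq> j\<close> st by auto
    then show False using xS by simp
  qed
  have "i = j" using key[of i j s t] key[of j i t s] eq st ij by (cases "i \<le> j") auto
  then show ?thesis using eq x Sc by (metis nat_pow_closed r_cancel)
qed

lemma ext_card:
  assumes S: "subgroup S G" and x: "x \<in> carrier G" and n: "Factorial_Ring.prime (n::nat)" and xn: "x [^] n \<in> S"
    and nx: "\<forall>s\<in>S. x \<otimes> s \<otimes> inv x \<in> S \<and> inv x \<otimes> s \<otimes> x \<in> S"
    and xS: "x \<notin> S" and fin: "finite S"
  shows "finite (generate G (S \<union> {x}))" "card (generate G (S \<union> {x})) = n * card S"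
proof -
  have n1: "1 < n" using n prime_gt_1_nat by blast
  have eq0: "generate G (S \<union> {x}) = {s \<otimes> x [^] j | s j. s \<in> S \<and> j < n}"
    by (rule ext_gen[OF S x n1 xn nx])
  have eq1: "{s \<otimes> x [^] j | s j. s \<in> S \<and> j < n} = (\<lambda>(s, j). s \<otimes> x [^] j) ` (S \<times> {..<n})"
    by auto
  have eqE: "generate G (S \<union> {x}) = (\<lambda>(s, j). s \<otimes> x [^] j) ` (S \<times> {..<n})"
    using eq0 eq1 by simp
  have inj: "inj_on (\<lambda>(s, j). s \<otimes> x [^] j) (S \<times> {..<n})"
    by (rule inj_onI) (use ext_unique[OF S x n xn xS] in auto)
  show "finite (generate G (S \<union> {x}))" unfolding eqE using fin by auto
  show "card (generate G (S \<union> {x})) = n * card S"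
    unfolding eqE card_image[OF inj] card_cartesian_product by simp
qed

end


locale cgrp = group G for G (structure) +
  fixes Z
  assumes Zsub: "Z \<subseteq> carrier G"
    and Zcent: "\<And>z g. z \<in> Z \<Longrightarrow> g \<in> carrier G \<Longrightarrow> z \<otimes> g = g \<otimes> z"
    and commZ: "\<And>x y. x \<in> carrier G \<Longrightarrow> y \<in> carrier G \<Longrightarrow> commutator G x y \<in> Z"
begin

abbreviation cm where "cm x y \<equiv> commutator G x y"

lemma cm_closed[simp]: "x \<in> carrier G \<Longrightarrow> y \<in> carrier G \<Longrightarrow> cm x y \<in> carrier G"
  unfolding commutator_def by simp

lemma cm_unique:
  assumes "u \<in> carrier G" "x \<in> carrier G" "c \<in> carrier G" "u \<otimes> x = c \<otimes> x \<otimes> u"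
  shows "cm u x = c"
proof -
  have "cm u x = (u \<otimes> x) \<otimes> inv u \<otimes> inv x" unfolding commutator_def by simp
  also have "\<dots> = c \<otimes> x \<otimes> u \<otimes> inv u \<otimes> inv x" using assms by simp
  also have "\<dots> = c" using assms by (simp add: m_assoc)
  finally show ?thesis .
qed

lemma cm_swap:
  assumes "u \<in> carrier G" "v \<in> carrier G"
  shows "u \<otimes> v = cm u v \<otimes> v \<otimes> u"
  using assms unfolding commutator_def by (simp add: m_assoc)

lemma cm_central: "u \<in> carrier G \<Longrightarrow> v \<in> carrier G \<Longrightarrow> g \<in> carrier G \<Longrightarrow> cm u v \<otimes> g = g \<otimes> cm u v"
  using Zcent commZ by blast

lemma cm_eq1: "u \<in> carrier G \<Longrightarrow> v \<in> carrier G \<Longrightarrow> cm u v = \<one> \<longleftrightarrow> u \<otimes> v = v \<otimes> u"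
  by (metis cm_closed cm_swap cm_unique l_one m_closed one_closed)

lemma cm_mult_right:
  assumes u: "u \<in> carrier G" and v: "v \<in> carrier G" and w: "w \<in> carrier G"
  shows "cm u (v \<otimes> w) = cm u v \<otimes> cm u w"
proof (rule cm_unique)
  have "u \<otimes> (v \<otimes> w) = (u \<otimes> v) \<otimes> w" using assms by (simp add: m_assoc)
  also have "\<dots> = cm u v \<otimes> v \<otimes> (u \<otimes> w)" using assms by (simp add: cm_swap[OF u v] m_assoc)
  also have "\<dots> = cm u v \<otimes> (v \<otimes> cm u w) \<otimes> w \<otimes> u" using assms by (simp add: cm_swap[OF u w] m_assoc)
  also have "\<dots> = cm u v \<otimes> (cm u w \<otimes> v) \<otimes> w \<otimes> u" using assms cm_central[OF u w v] by simp
  also have "\<dots> = cm u v \<otimes> cm u w \<otimes> (v \<otimes> w) \<otimes> u" using assms by (simp add: m_assoc)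
  finally show "u \<otimes> (v \<otimes> w) = cm u v \<otimes> cm u w \<otimes> (v \<otimes> w) \<otimes> u" .
qed (use assms in auto)

lemma cm_mult_left:
  assumes u: "u \<in> carrier G" and v: "v \<in> carrier G" and w: "w \<in> carrier G"
  shows "cm (u \<otimes> v) w = cm u w \<otimes> cm v w"
proof (rule cm_unique)
  have "u \<otimes> v \<otimes> w = u \<otimes> (v \<otimes> w)" using assms by (simp add: m_assoc)
  also have "\<dots> = (u \<otimes> cm v w) \<otimes> w \<otimes> v" using assms by (simp add: cm_swap[OF v w] m_assoc)
  also have "\<dots> = cm v w \<otimes> (u \<otimes> w) \<otimes> v" using assms cm_central[OF v w u] by (simp add: m_assoc[symmetric])
  also have "\<dots> = cm v w \<otimes> cm u w \<otimes> w \<otimes> u \<otimes> v" using assms by (simp add: cm_swap[OF u w] m_assoc)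
  also have "\<dots> = cm u w \<otimes> cm v w \<otimes> w \<otimes> (u \<otimes> v)" using assms cm_central[OF v w, of "cm u w"] by (simp add: m_assoc[symmetric])
  finally show "u \<otimes> v \<otimes> w = cm u w \<otimes> cm v w \<otimes> w \<otimes> (u \<otimes> v)" .
qed (use assms in auto)

lemma cm_inv_swap:
  assumes u: "u \<in> carrier G" and v: "v \<in> carrier G"
  shows "cm v u = inv (cm u v)"
proof (rule cm_unique)
  have "inv (cm u v) \<otimes> u \<otimes> v = inv (cm u v) \<otimes> (cm u v \<otimes> v \<otimes> u)"
    using assms by (simp add: m_assoc cm_swap[OF u v])
  also have "\<dots> = v \<otimes> u" using assms by (simp add: m_assoc[symmetric])
  finally show "v \<otimes> u = inv (cm u v) \<otimes> u \<otimes> v" by simp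
qed (use assms in auto)

lemma cm_pow_right:
  assumes u: "u \<in> carrier G" and v: "v \<in> carrier G"
  shows "cm u (v [^] (n::nat)) = cm u v [^] n"
proof (induct n)
  case 0 then show ?case using u by (simp add: cm_eq1)
next
  case (Suc n) then show ?case using assms by (simp add: cm_mult_right)
qed

lemma cm_pow_left:
  assumes u: "u \<in> carrier G" and v: "v \<in> carrier G"
  shows "cm (u [^] (n::nat)) v = cm u v [^] n"
proof (induct n)
  case 0 then show ?case using v by (simp add: cm_eq1)
next
  case (Suc n) then show ?case using assms by (simp add: cm_mult_left)
qed

lemma cm_self: "u \<in> carrier G \<Longrightarrow> cm u u = \<one>"
  by (simp add: cm_eq1)

lemma cm_Z_left: "z \<in> Z \<Longrightarrow> u \<in> carrier G \<Longrightarrow> cm z u = \<one>"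
  using Zsub Zcent cm_eq1 by auto

lemma cm_Z_right: "z \<in> Z \<Longrightarrow> u \<in> carrier G \<Longrightarrow> cm u z = \<one>"
  using Zsub Zcent cm_eq1 by auto

end


context group begin
lemma cm_one_iff: "u \<in> carrier G \<Longrightarrow> v \<in> carrier G \<Longrightarrow> commutator G u v = \<one> \<longleftrightarrow> u \<otimes> v = v \<otimes> u"
proof -
  assume u: "u \<in> carrier G" and v: "v \<in> carrier G"
  have "commutator G u v = (u \<otimes> v) \<otimes> inv (v \<otimes> u)"
    unfolding commutator_def using u v by (simp add: inv_mult_group m_assoc)
  then show ?thesis using u v
    by (metis inv_closed inv_mult_group m_closed r_inv inv_equality r_one)
qed
end

locale qc = group G for G (structure) +
  fixes p M f
  assumes p: "Factorial_Ring.prime (p::nat)"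
    and Msub: "subgroup M G"
    and f: "f \<in> iso (G\<lparr>carrier := M\<rparr>) (prufer_group p)"
begin

lemma p1: "1 < p" using p prime_gt_1_nat by blast

lemma Mc: "m \<in> M \<Longrightarrow> m \<in> carrier G" by (rule subgroup.mem_carrier[OF Msub])

lemma f_mult: "x \<in> M \<Longrightarrow> y \<in> M \<Longrightarrow> f (x \<otimes> y) = f x * f y"
  using f unfolding iso_def hom_def prufer_group_def by auto

lemma f_car: "x \<in> M \<Longrightarrow> \<exists>n. f x ^ (p ^ n) = 1"
  using f unfolding iso_def hom_def prufer_group_def by (auto simp: Pi_iff)

lemma f_bij: "bij_betw f M {z. \<exists>n. z ^ (p ^ n) = 1}"
  using f unfolding iso_def prufer_group_def by auto

lemma f_inj: "inj_on f M" using f_bij bij_betw_def by blast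

lemma f_one: "f \<one> = 1"
proof -
  have one: "\<one> \<in> M" by (rule subgroup.one_closed[OF Msub])
  have "f \<one> = f \<one> * f \<one>" using f_mult[OF one one] by simp
  moreover have "f \<one> \<noteq> 0"
  proof
    assume "f \<one> = 0"
    moreover obtain n where "f \<one> ^ (p ^ n) = 1" using f_car[OF one] by blast
    moreover have "p ^ n > 0" using p1 by simp
    ultimately show False by (simp add: zero_power)
  qed
  ultimately show ?thesis by (metis mult_cancel_left1)
qed

lemma f_pow: "x \<in> M \<Longrightarrow> f (x [^] (n::nat)) = f x ^ n"
proof (induct n)
  case 0 then show ?case by (simp add: f_one)
next
  case (Suc n)
  have "x [^] n \<in> M" using Suc.prems by (rule sub_pow_closed[OF Msub])
  then show ?case using Suc by (simp add: f_mult)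
qed

lemma M_ppow: "m \<in> M \<Longrightarrow> \<exists>n. m [^] (p ^ n) = \<one>"
proof -
  assume m: "m \<in> M"
  obtain n where n: "f m ^ (p ^ n) = 1" using f_car[OF m] by blast
  have "f (m [^] (p ^ n)) = f \<one>" using n m by (simp add: f_pow f_one)
  moreover have "m [^] (p ^ n) \<in> M" "\<one> \<in> M"
    using m sub_pow_closed[OF Msub] subgroup.one_closed[OF Msub] by auto
  ultimately have "m [^] (p ^ n) = \<one>" using f_inj inj_on_def by metis
  then show ?thesis by blast
qed

lemma Omega_fin: "finite {m \<in> M. m [^] (p ^ n) = \<one>} \<and> card {m \<in> M. m [^] (p ^ n) = \<one>} \<le> p ^ n"
proof -
  let ?O = "{m \<in> M. m [^] (p ^ n) = \<one>}"
  let ?R = "{z::complex. z ^ (p ^ n) = 1}"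
  have pn: "0 < p ^ n" using p1 by simp
  have cR: "card ?R = p ^ n" by (rule card_roots_unity_eq[OF pn])
  then have fR: "finite ?R" using pn card_ge_0_finite by force
  have sub: "f ` ?O \<subseteq> ?R"
  proof
    fix z assume "z \<in> f ` ?O"
    then obtain m where "m \<in> M" "m [^] (p ^ n) = \<one>" "z = f m" by auto
    then show "z \<in> ?R" using f_pow[of m "p ^ n"] f_one by simp
  qed
  have inj: "inj_on f ?O" using f_inj inj_on_subset[of f M ?O] by blast
  have fO: "finite ?O" using finite_imageD[OF finite_subset[OF sub fR] inj] .
  have "card ?O = card (f ` ?O)" using card_image[OF inj] by simp
  also have "\<dots> \<le> card ?R" using card_mono[OF fR sub] .
  finally show ?thesis using fO cR by simp
qed

lemma exists_a: "\<exists>a\<in>M. a [^] p = \<one> \<and> a \<noteq> \<one>"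
proof -
  let ?R = "{z::complex. z ^ p = 1}"
  have cR: "card ?R = p" using card_roots_unity_eq p1 by simp
  have "\<not> ?R \<subseteq> {1}"
  proof
    assume "?R \<subseteq> {1}"
    then have "card ?R \<le> card {1::complex}" by (intro card_mono) auto
    then have "card ?R \<le> 1" by simp
    then show False using cR p1 by simp
  qed
  then obtain z :: complex where z: "z ^ p = 1" "z \<noteq> 1" by blast
  have "z \<in> {z. \<exists>n. z ^ (p ^ n) = 1}" using z by (auto intro!: exI[of _ 1])
  then obtain a where a: "a \<in> M" "f a = z" using f_bij unfolding bij_betw_def by force
  have "f (a [^] p) = f \<one>" using a z f_pow f_one by simp
  moreover have "a [^] p \<in> M" "\<one> \<in> M"
    using a sub_pow_closed[OF Msub] subgroup.one_closed[OF Msub] by auto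
  ultimately have "a [^] p = \<one>" using a f_inj inj_on_def by metis
  moreover have "a \<noteq> \<one>" using a z f_one by auto
  ultimately show ?thesis using a by blast
qed

end


locale qcn = qc +
  assumes Mnormal: "M \<lhd> G"
    and Mcomm: "\<And>x y. x \<in> M \<Longrightarrow> y \<in> M \<Longrightarrow> x \<otimes> y = y \<otimes> x"
    and Mdiv: "\<forall>x\<in>M. \<forall>n::nat. n > 0 \<longrightarrow> (\<exists>y\<in>M. y [^] n = x)"
    and nil: "\<exists>n. lower_central G n = {\<one>}"
begin

lemma divisible_full:
  assumes DM: "D \<subseteq> M" and Dpow: "\<And>y k. y \<in> D \<Longrightarrow> y [^] (k::nat) \<in> D"
    and Ddiv: "\<And>y n. y \<in> D \<Longrightarrow> 0 < (n::nat) \<Longrightarrow> \<exists>z\<in>D. z [^] n = y"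
    and d: "d \<in> D" "d \<noteq> \<one>"
  shows "M \<subseteq> D"
proof
  fix m assume m: "m \<in> M"
  obtain N where N: "m [^] (p ^ N) = \<one>" using M_ppow[OF m] by blast
  obtain N0 where N0: "d [^] (p ^ N0) = \<one>" using M_ppow d DM by blast
  have pN: "0 < p ^ N" using p1 by simp
  obtain z where z: "z \<in> D" "z [^] (p ^ N) = d" using Ddiv[OF d(1) pN] by blast
  have zc: "z \<in> carrier G" using z DM Mc by blast
  have "z [^] (p ^ (N + N0)) = (z [^] (p ^ N)) [^] (p ^ N0)" using zc by (simp add: power_add nat_pow_pow)
  then have "z [^] (p ^ (N + N0)) = \<one>" using z N0 by simp
  then have "ord z dvd p ^ (N + N0)" using pow_eq_id[OF zc] by blast
  then obtain e where e: "ord z = p ^ e" using divides_primepow_nat[OF p] by blast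
  have eN: "N < e"
  proof (rule ccontr)
    assume "\<not> N < e"
    then have "ord z dvd p ^ N" using e by (simp add: le_imp_power_dvd)
    then have "z [^] (p ^ N) = \<one>" using pow_eq_id[OF zc] by blast
    then show False using z d by simp
  qed
  define w where "w = z [^] (p ^ (e - N))"
  have wD: "w \<in> D" unfolding w_def using Dpow z by blast
  have wc: "w \<in> carrier G" using zc w_def by simp
  have pe: "p ^ e = p ^ (e - N) * p ^ N" using eN by (simp add: power_add[symmetric])
  have ordw: "ord w = p ^ N"
  proof -
    have "p ^ (e - N) dvd ord z" using e pe by simp
    moreover have "p ^ (e - N) \<noteq> 0" using p1 by simp
    ultimately have "ord w = ord z div p ^ (e - N)" unfolding w_def by (rule ord_pow[OF zc])
    also have "\<dots> = p ^ N" using e pe p1 by simp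
    finally show ?thesis .
  qed
  let ?A = "(\<lambda>i. w [^] i) ` {0 .. ord w - 1}"
  let ?O = "{m \<in> M. m [^] (p ^ N) = \<one>}"
  have cA: "card ?A = p ^ N"
    using card_image[OF ord_inj[OF wc]] ordw pN by simp
  have AO: "?A \<subseteq> ?O"
  proof
    fix y assume "y \<in> ?A"
    then obtain i :: nat where y: "y = w [^] i" by blast
    have "y \<in> M" using y wD Dpow DM by blast
    moreover have "y [^] (p ^ N) = \<one>"
      using y wc ordw by (simp add: nat_pow_pow pow_eq_id)
    ultimately show "y \<in> ?O" by blast
  qed
  have "?A = ?O"
    using card_subset_eq[OF conjunct1[OF Omega_fin] AO] cA conjunct2[OF Omega_fin[of N]]
      card_mono[OF conjunct1[OF Omega_fin] AO] by simp
  then have "m \<in> ?A" using m N by blast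
  then show "m \<in> D" using wD Dpow by blast
qed

definition psi :: "'a \<Rightarrow> 'a \<Rightarrow> 'a" where "psi x m = commutator G m x"

lemma conjM: "x \<in> carrier G \<Longrightarrow> m \<in> M \<Longrightarrow> x \<otimes> m \<otimes> inv x \<in> M"
  by (rule normal.inv_op_closed2[OF Mnormal])

lemma psi_eq: "x \<in> carrier G \<Longrightarrow> m \<in> M \<Longrightarrow> psi x m = m \<otimes> (x \<otimes> inv m \<otimes> inv x)"
  unfolding psi_def commutator_def using Mc by (simp add: m_assoc)

lemma psi_M: "x \<in> carrier G \<Longrightarrow> m \<in> M \<Longrightarrow> psi x m \<in> M"
  using psi_eq conjM subgroup.m_inv_closed[OF Msub] subgroup.m_closed[OF Msub] by simp

lemma psi_mult:
  assumes x: "x \<in> carrier G" and m: "m1 \<in> M" "m2 \<in> M"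
  shows "psi x (m1 \<otimes> m2) = psi x m1 \<otimes> psi x m2"
proof -
  define c1 where "c1 = x \<otimes> inv m1 \<otimes> inv x"
  define c2 where "c2 = x \<otimes> inv m2 \<otimes> inv x"
  have cM: "c1 \<in> M" "c2 \<in> M" unfolding c1_def c2_def using conjM x m subgroup.m_inv_closed[OF Msub] by auto
  have mc: "m1 \<in> carrier G" "m2 \<in> carrier G" "c1 \<in> carrier G" "c2 \<in> carrier G" using m cM Mc by auto
  have "x \<otimes> inv (m1 \<otimes> m2) \<otimes> inv x = c2 \<otimes> c1"
    unfolding c1_def c2_def using x mc by (simp add: inv_mult_group m_assoc)
  then have "psi x (m1 \<otimes> m2) = m1 \<otimes> m2 \<otimes> (c2 \<otimes> c1)"
    using psi_eq[OF x subgroup.m_closed[OF Msub m]] by simp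
  also have "\<dots> = m1 \<otimes> ((m2 \<otimes> c2) \<otimes> c1)" using mc by (simp add: m_assoc)
  also have "(m2 \<otimes> c2) \<otimes> c1 = c1 \<otimes> (m2 \<otimes> c2)"
    using Mcomm subgroup.m_closed[OF Msub] m cM by blast
  also have "m1 \<otimes> (c1 \<otimes> (m2 \<otimes> c2)) = (m1 \<otimes> c1) \<otimes> (m2 \<otimes> c2)" using mc by (simp add: m_assoc)
  also have "\<dots> = psi x m1 \<otimes> psi x m2" using psi_eq x m c1_def c2_def by simp
  finally show ?thesis .
qed

lemma psi_one: "x \<in> carrier G \<Longrightarrow> psi x \<one> = \<one>"
  unfolding psi_def commutator_def by simp

lemma psi_pow: "x \<in> carrier G \<Longrightarrow> m \<in> M \<Longrightarrow> psi x (m [^] (n::nat)) = psi x m [^] n"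
proof (induct n)
  case 0 then show ?case using psi_one by simp
next
  case (Suc n) then show ?case using psi_mult sub_pow_closed[OF Msub] by simp
qed

lemma psi_iter_M: "x \<in> carrier G \<Longrightarrow> m \<in> M \<Longrightarrow> (psi x ^^ n) m \<in> M"
  by (induct n) (auto simp: psi_M)

lemma psi_iter_lc: "x \<in> carrier G \<Longrightarrow> m \<in> M \<Longrightarrow> (psi x ^^ n) m \<in> lower_central G n"
proof (induct n)
  case 0 then show ?case using Mc by simp
next
  case (Suc n)
  have "(psi x ^^ Suc n) m = commutator G ((psi x ^^ n) m) x" by (simp add: psi_def)
  also have "\<dots> \<in> lower_central G (Suc n)"
    using Suc by (auto intro!: generate.incl)
  finally show ?case .
qed

lemma M_central: "m \<in> M \<Longrightarrow> g \<in> carrier G \<Longrightarrow> m \<otimes> g = g \<otimes> m"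
proof -
  assume m: "m \<in> M" and x: "g \<in> carrier G"
  let ?D = "psi g ` M"
  have triv: "\<forall>d\<in>?D. d = \<one>"
  proof (rule ccontr)
    assume "\<not> (\<forall>d\<in>?D. d = \<one>)"
    then obtain d where d: "d \<in> ?D" "d \<noteq> \<one>" by blast
    have DM: "?D \<subseteq> M" using psi_M x by blast
    have Dpow: "y [^] (k::nat) \<in> ?D" if yD: "y \<in> ?D" for y k
    proof -
      obtain m' where "m' \<in> M" "y = psi g m'" using yD by blast
      then show ?thesis using psi_pow[OF x] sub_pow_closed[OF Msub] by (metis image_eqI)
    qed
    have Ddiv: "\<exists>z\<in>?D. z [^] n = y" if yD: "y \<in> ?D" and n0: "0 < (n::nat)" for y n
    proof -
      obtain m' where m': "m' \<in> M" "y = psi g m'" using yD by blast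
      obtain u where u: "u \<in> M" "u [^] n = m'" using Mdiv m' n0 by blast
      have "psi g u [^] n = psi g (u [^] n)" using psi_pow[OF x u(1), of n] by simp
      then have "psi g u [^] n = y" using u(2) m'(2) by simp
      then show ?thesis using u by blast
    qed
    have MD: "M \<subseteq> ?D" by (rule divisible_full[OF DM Dpow Ddiv d])
    have "M \<subseteq> (psi g ^^ n) ` M" for n
    proof (induct n)
      case 0 then show ?case by simp
    next
      case (Suc n)
      have "(psi g ^^ Suc n) ` M = (psi g ^^ n) ` (psi g ` M)" unfolding funpow_Suc_right image_comp[symmetric] by (rule refl)
      then show ?case using Suc MD by blast
    qed
    moreover obtain n where n: "lower_central G n = {\<one>}" using nil by blast
    moreover have "(psi g ^^ n) ` M \<subseteq> lower_central G n" using psi_iter_lc x by blast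
    ultimately have "M \<subseteq> {\<one>}" by blast
    then show False using exists_a by blast
  qed
  then have "commutator G m g = \<one>" using m unfolding psi_def by blast
  then show ?thesis using cm_one_iff m x Mc by blast
qed

end


locale chern = cgrp G M for G (structure) and M +
  fixes p a
  assumes p: "Factorial_Ring.prime (p::nat)"
    and Msub: "subgroup M G"
    and Mdiv: "\<forall>x\<in>M. \<forall>n::nat. n > 0 \<longrightarrow> (\<exists>y\<in>M. y [^] n = x)"
    and powM: "\<And>x. x \<in> carrier G \<Longrightarrow> x [^] p \<in> M"
    and finM: "finite {M #> x | x. x \<in> carrier G}"
    and aM: "a \<in> M" and ap: "a [^] p = \<one>" and a1: "a \<noteq> \<one>"
    and Omega: "\<And>m. m \<in> M \<Longrightarrow> m [^] p = \<one> \<Longrightarrow> \<exists>t<p. m = a [^] t"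
begin

lemma p1: "1 < p" using p prime_gt_1_nat by blast

lemma Mc: "m \<in> M \<Longrightarrow> m \<in> carrier G" by (rule subgroup.mem_carrier[OF Msub])

lemma ac: "a \<in> carrier G" using aM Mc by blast

lemma ord_a: "ord a = p"
proof -
  have "ord a dvd p" using pow_eq_id[OF ac] ap by blast
  moreover have "ord a \<noteq> 1" using ord_eq_1[OF ac] a1 by simp
  ultimately show ?thesis using p by (metis prime_nat_iff)
qed

lemma a_pow_eq1: "a [^] (t::nat) = \<one> \<longleftrightarrow> p dvd t"
  using pow_eq_id[OF ac] ord_a by simp

lemma cm_a: "x \<in> carrier G \<Longrightarrow> y \<in> carrier G \<Longrightarrow> \<exists>t<p. cm x y = a [^] t"
proof -
  assume x: "x \<in> carrier G" and y: "y \<in> carrier G"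
  have "cm x y [^] p = cm x (y [^] p)" using cm_pow_right[OF x y] by simp
  also have "\<dots> = \<one>" using cm_Z_right[OF powM[OF y] x] .
  finally have "cm x y [^] p = \<one>" .
  from Omega[OF commZ[OF x y] this] show ?thesis .
qed

lemma adjust: "x \<in> carrier G \<Longrightarrow> \<exists>m\<in>M. (x \<otimes> m) [^] p = \<one>"
proof -
  assume x: "x \<in> carrier G"
  have im: "inv (x [^] p) \<in> M" by (rule subgroup.m_inv_closed[OF Msub powM[OF x]])
  have "\<exists>y\<in>M. y [^] p = inv (x [^] p)" using bspec[OF Mdiv im] p1 by simp
  then obtain m where m: "m \<in> M" "m [^] p = inv (x [^] p)" by blast
  have "(x \<otimes> m) [^] p = x [^] p \<otimes> m [^] p"
    using pow_mult_distrib[of x m p] Zcent[OF m(1) x] x Mc[OF m(1)] by simp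
  also have "\<dots> = \<one>" using m x by simp
  finally show ?thesis using m by blast
qed

lemma normalS: assumes S: "subgroup S G" "M \<subseteq> S" and x: "x \<in> carrier G"
  shows "\<forall>s\<in>S. x \<otimes> s \<otimes> inv x \<in> S \<and> inv x \<otimes> s \<otimes> x \<in> S"
proof
  fix s assume s: "s \<in> S"
  have sc: "s \<in> carrier G" by (rule subgroup.mem_carrier[OF S(1) s])
  have e1: "x \<otimes> s \<otimes> inv x = cm x s \<otimes> s"
    using cm_swap[OF x sc] x sc by (simp add: m_assoc)
  have e2: "inv x \<otimes> s \<otimes> x = cm (inv x) s \<otimes> s"
    using cm_swap[OF inv_closed[OF x] sc] x sc by (simp add: m_assoc)
  have "cm x s \<in> S" "cm (inv x) s \<in> S" using commZ[OF x sc] commZ[OF inv_closed[OF x] sc] S(2) by auto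
  then show "x \<otimes> s \<otimes> inv x \<in> S \<and> inv x \<otimes> s \<otimes> x \<in> S"
    unfolding e1 e2 using subgroup.m_closed[OF S(1) _ s] by blast
qed

lemma ext2:
  assumes S: "subgroup S G" "M \<subseteq> S" and x: "x \<in> carrier G"
  shows "generate G (S \<union> {x}) = {s \<otimes> x [^] j | s j. s \<in> S \<and> j < p}"
proof -
  have "x [^] p \<in> S" using powM[OF x] S(2) by blast
  then show ?thesis by (rule ext_gen[OF S(1) x p1 _ normalS[OF S x]])
qed

lemma ext2_sub:
  assumes S: "subgroup S G" "M \<subseteq> S" and x: "x \<in> carrier G"
  shows "subgroup (generate G (S \<union> {x})) G"
proof -
  have "S \<union> {x} \<subseteq> carrier G" using subgroup.subset[OF S(1)] x by blast
  then show ?thesis by (rule generate_is_subgroup)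
qed

lemma Sc: "subgroup S G \<Longrightarrow> s \<in> S \<Longrightarrow> s \<in> carrier G" by (rule subgroup.mem_carrier)

lemma pair:
  assumes S: "subgroup S G" "M \<subseteq> S" and x0: "x0 \<in> S" and y0: "y0 \<in> S"
    and nc: "x0 \<otimes> y0 \<noteq> y0 \<otimes> x0"
  shows "\<exists>x\<in>S. \<exists>y\<in>S. x [^] p = \<one> \<and> y [^] p = \<one> \<and> cm x y = a"
proof -
  have x0c: "x0 \<in> carrier G" and y0c: "y0 \<in> carrier G" using Sc[OF S(1)] x0 y0 by auto
  obtain t where t: "t < p" "cm x0 y0 = a [^] t" using cm_a[OF x0c y0c] by blast
  have "cm x0 y0 \<noteq> \<one>" using nc cm_eq1[OF x0c y0c] by simp
  then have t0: "t \<noteq> 0" using t(2) by (metis nat_pow_0)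
  have "\<not> p dvd t" using t t0 by (metis dvd_imp_le not_le neq0_conv)
  then have "coprime p t" using p by (intro prime_imp_coprime)
  then have g: "gcd t p = 1" by (simp add: coprime_commute)
  obtain u v where uv: "t * u = p * v + gcd t p" using bezout_nat[of t p] t0 by auto
  then have uv1: "t * u = p * v + 1" using g by simp
  define y1 where "y1 = y0 [^] u"
  have y1S: "y1 \<in> S" unfolding y1_def by (rule sub_pow_closed[OF S(1) y0])
  have y1c: "y1 \<in> carrier G" unfolding y1_def using y0c by simp
  have "cm x0 y1 = (a [^] t) [^] u" unfolding y1_def using cm_pow_right[OF x0c y0c] t by simp
  also have "\<dots> = a [^] (p * v + 1)" using ac by (simp add: nat_pow_pow uv1)
  also have "\<dots> = a [^] (p * v) \<otimes> a [^] (1::nat)" using ac by (simp only: nat_pow_mult)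
  also have "\<dots> = a" using ac by (simp add: nat_pow_pow[symmetric] ap)
  finally have cxy1: "cm x0 y1 = a" .
  obtain m1 where m1: "m1 \<in> M" "(x0 \<otimes> m1) [^] p = \<one>" using adjust[OF x0c] by blast
  obtain m2 where m2: "m2 \<in> M" "(y1 \<otimes> m2) [^] p = \<one>" using adjust[OF y1c] by blast
  have m1c: "m1 \<in> carrier G" and m2c: "m2 \<in> carrier G" using m1 m2 Mc by auto
  have "cm (x0 \<otimes> m1) (y1 \<otimes> m2) = cm x0 (y1 \<otimes> m2) \<otimes> cm m1 (y1 \<otimes> m2)"
    using cm_mult_left x0c m1c y1c m2c by simp
  also have "\<dots> = cm x0 y1 \<otimes> cm x0 m2 \<otimes> cm m1 (y1 \<otimes> m2)"
    using cm_mult_right x0c m1c y1c m2c by simp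
  also have "\<dots> = a" using cxy1 cm_Z_right[OF m2(1) x0c] cm_Z_left[OF m1(1), of "y1 \<otimes> m2"] y1c m2c ac by simp
  finally have "cm (x0 \<otimes> m1) (y1 \<otimes> m2) = a" .
  moreover have "x0 \<otimes> m1 \<in> S" "y1 \<otimes> m2 \<in> S"
    using subgroup.m_closed[OF S(1)] x0 y1S m1 m2 S(2) by auto
  ultimately show ?thesis using m1 m2 by blast
qed

lemma decomp_xy:
  assumes x: "x \<in> carrier G" and y: "y \<in> carrier G" and xy: "cm x y = a" and s: "s \<in> carrier G"
  shows "\<exists>(i::nat) (j::nat). (s \<otimes> y [^] j \<otimes> x [^] i) \<otimes> x = x \<otimes> (s \<otimes> y [^] j \<otimes> x [^] i)
     \<and> (s \<otimes> y [^] j \<otimes> x [^] i) \<otimes> y = y \<otimes> (s \<otimes> y [^] j \<otimes> x [^] i)"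
proof -
  obtain ua where al: "ua < p" "cm x s = a [^] ua" using cm_a[OF x s] by blast
  obtain ub where be: "ub < p" "cm y s = a [^] ub" using cm_a[OF y s] by blast
  define c where "c = s \<otimes> y [^] (p - ua) \<otimes> x [^] ub"
  have cc: "c \<in> carrier G" unfolding c_def using s x y by simp
  have "cm x c = cm x s \<otimes> cm x (y [^] (p - ua)) \<otimes> cm x (x [^] ub)"
    unfolding c_def using s x y by (simp add: cm_mult_right)
  also have "\<dots> = a [^] ua \<otimes> a [^] (p - ua)"
    using al xy cm_pow_right[OF x y] cm_pow_right[OF x x] cm_self[OF x] ac by simp
  also have "\<dots> = a [^] p" using al ac by (simp add: nat_pow_mult)
  finally have c1: "cm x c = \<one>" using ap by simp
  have "cm y c = cm y s \<otimes> cm y (y [^] (p - ua)) \<otimes> cm y (x [^] ub)"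
    unfolding c_def using s x y by (simp add: cm_mult_right)
  also have "\<dots> = a [^] ub \<otimes> inv a [^] ub"
    using be cm_pow_right[OF y y] cm_pow_right[OF y x] cm_self[OF y] cm_inv_swap[OF x y] xy ac by simp
  also have "\<dots> = (a \<otimes> inv a) [^] ub"
    by (rule pow_mult_distrib[symmetric]) (use ac in simp_all)
  finally have c2: "cm y c = \<one>" using ac by simp
  have cx: "c \<otimes> x = x \<otimes> c" and cy: "c \<otimes> y = y \<otimes> c"
    using c1 c2 cm_eq1[OF x cc] cm_eq1[OF y cc] by simp_all
  show ?thesis
    apply (rule exI[where x=ub], rule exI[where x="p - ua"])
    using cx cy unfolding c_def by (rule conjI)
qed

end


context chern begin

definition symp :: "'a set \<Rightarrow> nat \<Rightarrow> (nat \<Rightarrow> 'a) \<Rightarrow> bool" where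
  "symp S k h \<longleftrightarrow> (\<forall>i\<in>{1..2*k}. h i \<in> S \<and> h i [^] p = \<one> \<and> h i \<notin> M)
     \<and> (\<forall>i\<in>{1..2*k}. \<forall>j\<in>{1..2*k}. i < j \<longrightarrow> cm (h i) (h j) = (if j = k + i then a else \<one>))"

definition Kset :: "nat \<Rightarrow> (nat \<Rightarrow> 'a) \<Rightarrow> 'a set" where
  "Kset k h = generate G (M \<union> h ` {1..2*k})"

definition Cset :: "'a set \<Rightarrow> nat \<Rightarrow> (nat \<Rightarrow> 'a) \<Rightarrow> 'a set" where
  "Cset S k h = {s. s \<in> S \<and> (\<forall>i\<in>{1..2*k}. s \<otimes> h i = h i \<otimes> s)}"

definition good :: "'a set \<Rightarrow> nat \<Rightarrow> (nat \<Rightarrow> 'a) \<Rightarrow> bool" where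
  "good S k h \<longleftrightarrow> symp S k h \<and> (\<forall>s\<in>S. \<exists>y\<in>Kset k h. \<exists>c\<in>Cset S k h. s = y \<otimes> c)
     \<and> (\<forall>u\<in>Cset S k h. \<forall>v\<in>Cset S k h. u \<otimes> v = v \<otimes> u) \<and> Kset k h \<inter> Cset S k h \<subseteq> M"

definition ext_h :: "nat \<Rightarrow> (nat \<Rightarrow> 'a) \<Rightarrow> 'a \<Rightarrow> 'a \<Rightarrow> nat \<Rightarrow> 'a" where
  "ext_h k h x y i = (if i = 1 then x else if i = k + 2 then y else if i \<le> k + 1 then h (i - 1) else h (i - 2))"

lemma ext_h_img: "ext_h k h x y ` {1..2 * Suc k} = {x, y} \<union> h ` {1..2*k}"
proof
  show "ext_h k h x y ` {1..2 * Suc k} \<subseteq> {x, y} \<union> h ` {1..2*k}"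
  proof
    fix z assume "z \<in> ext_h k h x y ` {1..2 * Suc k}"
    then obtain i where i: "i \<in> {1..2 * Suc k}" "z = ext_h k h x y i" by blast
    show "z \<in> {x, y} \<union> h ` {1..2*k}"
    proof (cases "i = 1 \<or> i = k + 2")
      case True then show ?thesis using i unfolding ext_h_def by auto
    next
      case False
      show ?thesis
      proof (cases "i \<le> k + 1")
        case True
        then have "z = h (i - 1)" "i - 1 \<in> {1..2*k}" using i False unfolding ext_h_def by auto
        then show ?thesis by blast
      next
        case F2: False
        then have "z = h (i - 2)" "i - 2 \<in> {1..2*k}" using i False unfolding ext_h_def by auto
        then show ?thesis by blast
      qed
    qed
  qed
next
  show "{x, y} \<union> h ` {1..2*k} \<subseteq> ext_h k h x y ` {1..2 * Suc k}"
  proof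
    fix z assume z: "z \<in> {x, y} \<union> h ` {1..2*k}"
    show "z \<in> ext_h k h x y ` {1..2 * Suc k}"
    proof (cases "z = x")
      case True
      have "ext_h k h x y 1 = x" unfolding ext_h_def by simp
      moreover have "(1::nat) \<in> {1..2 * Suc k}" by simp
      ultimately show ?thesis using True by (metis image_eqI)
    next
      case nx: False
      show ?thesis
      proof (cases "z = y")
        case True
        have "ext_h k h x y (k + 2) = y" unfolding ext_h_def by simp
        moreover have "k + 2 \<in> {1..2 * Suc k}" by simp
        ultimately show ?thesis using True by (metis image_eqI)
      next
        case False
        then obtain j where j: "j \<in> {1..2*k}" "z = h j" using z nx by blast
        show ?thesis
        proof (cases "j \<le> k")
          case True
          have "ext_h k h x y (j + 1) = h j" using True j unfolding ext_h_def by auto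
          moreover have "j + 1 \<in> {1..2 * Suc k}" using j by simp
          ultimately show ?thesis using j by (metis image_eqI)
        next
          case False
          have "ext_h k h x y (j + 2) = h j" using False j unfolding ext_h_def by auto
          moreover have "j + 2 \<in> {1..2 * Suc k}" using j by simp
          ultimately show ?thesis using j by (metis image_eqI)
        qed
      qed
    qed
  qed
qed

lemma step_symp:
  assumes hs: "symp C0 k h" and C0S: "C0 \<subseteq> S" and xS: "x \<in> S" and yS: "y \<in> S"
    and xp: "x [^] p = \<one>" and yp: "y [^] p = \<one>" and xy: "cm x y = a"
    and xc: "x \<in> carrier G" and yc: "y \<in> carrier G"
    and comm: "\<forall>c\<in>C0. c \<otimes> x = x \<otimes> c \<and> c \<otimes> y = y \<otimes> c"
    and C0c: "C0 \<subseteq> carrier G"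
  shows "symp S (Suc k) (ext_h k h x y)"
proof -
  let ?h = "ext_h k h x y"
  have xM: "x \<notin> M" using cm_Z_left[OF _ yc] xy a1 by auto
  have yM: "y \<notin> M" using cm_Z_right[OF _ xc] xy a1 by auto
  have hp: "h j \<in> C0" "h j [^] p = \<one>" "h j \<notin> M" if "j \<in> {1..2*k}" for j
    using hs that unfolding symp_def by auto
  have hc: "h j \<in> carrier G" if "j \<in> {1..2*k}" for j using hp(1)[OF that] C0c by blast
  have hx: "cm x (h j) = \<one>" "cm y (h j) = \<one>" "cm (h j) y = \<one>" if "j \<in> {1..2*k}" for j
  proof -
    have e: "h j \<otimes> x = x \<otimes> h j" "h j \<otimes> y = y \<otimes> h j" using comm hp(1)[OF that] by auto
    show "cm x (h j) = \<one>" using cm_eq1[OF xc hc[OF that]] e by simp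
    show "cm y (h j) = \<one>" using cm_eq1[OF yc hc[OF that]] e by simp
    show "cm (h j) y = \<one>" using cm_eq1[OF hc[OF that] yc] e by simp
  qed
  have rel: "cm (h i) (h j) = (if j = k + i then a else \<one>)" if "i \<in> {1..2*k}" "j \<in> {1..2*k}" "i < j" for i j
    using hs that unfolding symp_def by blast
  have part1: "\<forall>i\<in>{1..2 * Suc k}. ?h i \<in> S \<and> ?h i [^] p = \<one> \<and> ?h i \<notin> M"
  proof
    fix i assume i: "i \<in> {1..2 * Suc k}"
    then have "?h i \<in> {x, y} \<union> h ` {1..2*k}" using ext_h_img by blast
    then consider "?h i = x" | "?h i = y" | j where "j \<in> {1..2*k}" "?h i = h j" by blast
    then show "?h i \<in> S \<and> ?h i [^] p = \<one> \<and> ?h i \<notin> M"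
    proof cases
      case 1 then show ?thesis using xS xp xM by simp
    next
      case 2 then show ?thesis using yS yp yM by simp
    next
      case 3 then show ?thesis using hp[OF 3(1)] C0S by auto
    qed
  qed
  have part2: "cm (?h i) (?h j) = (if j = Suc k + i then a else \<one>)"
    if i: "i \<in> {1..2 * Suc k}" and j: "j \<in> {1..2 * Suc k}" and ij: "i < j" for i j
  proof (cases "i = 1")
    case True
    show ?thesis
    proof (cases "j = k + 2")
      case True
      then show ?thesis using \<open>i = 1\<close> xy unfolding ext_h_def by simp
    next
      case False
      define j0 where "j0 = (if j \<le> k + 1 then j - 1 else j - 2)"
      have hj: "?h j = h j0" unfolding ext_h_def j0_def using False ij \<open>i = 1\<close> by auto
      have j0r: "j0 \<in> {1..2*k}" unfolding j0_def using j ij \<open>i = 1\<close> False by auto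
      have "?h i = x" using \<open>i = 1\<close> unfolding ext_h_def by simp
      then show ?thesis using hj hx(1)[OF j0r] False \<open>i = 1\<close> by simp
    qed
  next
    case inz: False
    show ?thesis
    proof (cases "i = k + 2")
      case True
      define j0 where "j0 = j - 2"
      have hj: "?h j = h j0" unfolding ext_h_def j0_def using True ij by auto
      have j0r: "j0 \<in> {1..2*k}" unfolding j0_def using j ij True by auto
      have "?h i = y" using True unfolding ext_h_def by simp
      then show ?thesis using hj hx(2)[OF j0r] True j by auto
    next
      case False
      define i0 where "i0 = (if i \<le> k + 1 then i - 1 else i - 2)"
      have hi: "?h i = h i0" unfolding ext_h_def i0_def using False inz i by auto
      have i0r: "i0 \<in> {1..2*k}" unfolding i0_def using i inz False by auto
      show ?thesis
      proof (cases "j = k + 2")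
        case True
        have "?h j = y" using True unfolding ext_h_def by simp
        then show ?thesis using hi hx(3)[OF i0r] True inz by auto
      next
        case jF: False
        define j0 where "j0 = (if j \<le> k + 1 then j - 1 else j - 2)"
        have hj: "?h j = h j0" unfolding ext_h_def j0_def using jF ij inz i by auto
        have j0r: "j0 \<in> {1..2*k}" unfolding j0_def using j ij inz jF i by auto
        have ij0: "i0 < j0" unfolding i0_def j0_def using ij inz False jF i j by auto
        have iff: "(j0 = k + i0) \<longleftrightarrow> (j = Suc k + i)" unfolding i0_def j0_def using ij inz False jF i j by auto
        show ?thesis using hi hj rel[OF i0r j0r ij0] iff by simp
      qed
    qed
  qed
  show ?thesis unfolding symp_def using part1 part2 by blast
qed

lemma symp_c: "symp S k h \<Longrightarrow> S \<subseteq> carrier G \<Longrightarrow> i \<in> {1..2*k} \<Longrightarrow> h i \<in> carrier G"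
  unfolding symp_def by blast

lemma Kset_props:
  assumes hs: "symp S k h" and Sc: "S \<subseteq> carrier G"
  shows "subgroup (Kset k h) G" "M \<subseteq> Kset k h" "\<And>i. i \<in> {1..2*k} \<Longrightarrow> h i \<in> Kset k h"
proof -
  have Y: "M \<union> h ` {1..2*k} \<subseteq> carrier G" using Zsub symp_c[OF hs Sc] by blast
  show "subgroup (Kset k h) G" unfolding Kset_def by (rule generate_is_subgroup[OF Y])
  show "M \<subseteq> Kset k h" unfolding Kset_def by (auto intro: generate.incl)
  show "\<And>i. i \<in> {1..2*k} \<Longrightarrow> h i \<in> Kset k h" unfolding Kset_def by (auto intro: generate.incl)
qed

lemma Kset_comm:
  assumes hs: "symp S k h" and Sc: "S \<subseteq> carrier G" and c: "c \<in> carrier G"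
    and ch: "\<forall>i\<in>{1..2*k}. c \<otimes> h i = h i \<otimes> c" and yK: "z \<in> Kset k h"
  shows "c \<otimes> z = z \<otimes> c"
proof -
  have Y: "M \<union> h ` {1..2*k} \<subseteq> carrier G" using Zsub symp_c[OF hs Sc] by blast
  have "\<forall>w\<in>M \<union> h ` {1..2*k}. c \<otimes> w = w \<otimes> c"
  proof
    fix w assume "w \<in> M \<union> h ` {1..2*k}"
    then show "c \<otimes> w = w \<otimes> c"
    proof
      assume "w \<in> M" then show ?thesis using Zcent[OF _ c] by simp
    next
      assume "w \<in> h ` {1..2*k}" then show ?thesis using ch by blast
    qed
  qed
  then show ?thesis using comm_gen[OF c Y] yK unfolding Kset_def by blast
qed

lemma Cset_eq: "S \<subseteq> carrier G \<Longrightarrow> Cset S k h = S \<inter> centr G (h ` {1..2*k})"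
  unfolding Cset_def centr_def by auto

lemma Cset_sub:
  assumes S: "subgroup S G" and hs: "symp S k h"
  shows "subgroup (Cset S k h) G"
proof -
  have "h ` {1..2*k} \<subseteq> carrier G" using symp_c[OF hs subgroup.subset[OF S]] by blast
  then have "subgroup (centr G (h ` {1..2*k})) G" by (rule centr_subgroup)
  then show ?thesis unfolding Cset_eq[OF subgroup.subset[OF S]] by (rule subgroups_Inter_pair[OF S])
qed

lemma M_Cset: assumes "M \<subseteq> S" "symp S k h" "S \<subseteq> carrier G" shows "M \<subseteq> Cset S k h"
proof
  fix m assume m: "m \<in> M"
  have "\<forall>i\<in>{1..2*k}. m \<otimes> h i = h i \<otimes> m" using Zcent[OF m] symp_c[OF assms(2,3)] by simp
  then show "m \<in> Cset S k h" unfolding Cset_def using m assms(1) by blast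
qed

lemma coset_fin: assumes "S \<subseteq> carrier G" shows "finite {M #> s | s. s \<in> S}"
proof -
  have "{M #> s | s. s \<in> S} \<subseteq> {M #> x | x. x \<in> carrier G}" using assms by blast
  then show ?thesis using finite_subset finM by blast
qed

lemma phase1_abelian:
  assumes S: "subgroup S G" "M \<subseteq> S" and ab: "\<forall>u\<in>S. \<forall>v\<in>S. u \<otimes> v = v \<otimes> u"
  shows "good S 0 h"
proof -
  have K: "Kset 0 h = M" unfolding Kset_def using gen_subgroup[OF Msub] by simp
  have C: "Cset S 0 h = S" unfolding Cset_def by simp
  have "\<forall>s\<in>S. \<exists>y\<in>Kset 0 h. \<exists>c\<in>Cset S 0 h. s = y \<otimes> c"
  proof
    fix s assume s: "s \<in> S"
    have "s = \<one> \<otimes> s" using Sc[OF S(1) s] by simp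
    moreover have "\<one> \<in> Kset 0 h" unfolding K by (rule subgroup.one_closed[OF Msub])
    ultimately show "\<exists>y\<in>Kset 0 h. \<exists>c\<in>Cset S 0 h. s = y \<otimes> c" using s C by blast
  qed
  moreover have "symp S 0 h" unfolding symp_def by simp
  ultimately show ?thesis unfolding good_def using K C ab by blast
qed

lemma phase1: "subgroup S G \<Longrightarrow> M \<subseteq> S \<Longrightarrow> \<exists>k h. good S k h"
proof (induct "card {M #> s | s. s \<in> S}" arbitrary: S rule: less_induct)
  case less
  have S: "subgroup S G" "M \<subseteq> S" by fact+
  have Scar: "S \<subseteq> carrier G" by (rule subgroup.subset[OF S(1)])
  show ?case
  proof (cases "\<forall>u\<in>S. \<forall>v\<in>S. u \<otimes> v = v \<otimes> u")
    case True then show ?thesis using phase1_abelian[OF S] by blast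
  next
    case False
    then obtain x0 y0 where "x0 \<in> S" "y0 \<in> S" "x0 \<otimes> y0 \<noteq> y0 \<otimes> x0" by blast
    then obtain x y where xy: "x \<in> S" "y \<in> S" "x [^] p = \<one>" "y [^] p = \<one>" "cm x y = a"
      using pair[OF S] by blast
    have xc: "x \<in> carrier G" and yc: "y \<in> carrier G" using xy Scar by auto
    define C0 where "C0 = S \<inter> centr G {x, y}"
    have C0sub: "subgroup C0 G" unfolding C0_def
      by (rule subgroups_Inter_pair[OF S(1) centr_subgroup]) (use xc yc in auto)
    have C0S: "C0 \<subseteq> S" unfolding C0_def by blast
    have C0c: "C0 \<subseteq> carrier G" using C0S Scar by blast
    have comm: "\<forall>c\<in>C0. c \<otimes> x = x \<otimes> c \<and> c \<otimes> y = y \<otimes> c" unfolding C0_def centr_def by blast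
    have MC0: "M \<subseteq> C0"
    proof
      fix m assume m: "m \<in> M"
      have "m \<otimes> x = x \<otimes> m" "m \<otimes> y = y \<otimes> m" using Zcent[OF m xc] Zcent[OF m yc] by simp_all
      then show "m \<in> C0" unfolding C0_def centr_def using m S(2) Zsub by blast
    qed
    have xnC0: "x \<notin> C0"
    proof
      assume "x \<in> C0"
      then have "x \<otimes> y = y \<otimes> x" using comm by blast
      then have "cm x y = \<one>" using cm_eq1[OF xc yc] by simp
      then show False using xy a1 by simp
    qed
    have lt: "card {M #> s | s. s \<in> C0} < card {M #> s | s. s \<in> S}"
    proof (rule psubset_card_mono[OF coset_fin[OF Scar]])
      have sub: "{M #> s | s. s \<in> C0} \<subseteq> {M #> s | s. s \<in> S}" using C0S by blast
      have "M #> x \<notin> {M #> s | s. s \<in> C0}"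
      proof
        assume "M #> x \<in> {M #> s | s. s \<in> C0}"
        then obtain c where c: "c \<in> C0" "M #> x = M #> c" by blast
        then have "x \<in> M #> c" using repr_independenceD[OF Msub xc] by simp
        then obtain m where m: "m \<in> M" "x = m \<otimes> c" unfolding r_coset_def by blast
        then have "x \<in> C0" using subgroup.m_closed[OF C0sub] MC0 c by blast
        then show False using xnC0 by simp
      qed
      moreover have "M #> x \<in> {M #> s | s. s \<in> S}" using xy by blast
      ultimately show "{M #> s | s. s \<in> C0} \<subset> {M #> s | s. s \<in> S}" using sub by blast
    qed
    obtain k h where g: "good C0 k h" using less.hyps[OF lt C0sub MC0] by blast
    have hs: "symp C0 k h" and dec: "\<forall>s\<in>C0. \<exists>y\<in>Kset k h. \<exists>c\<in>Cset C0 k h. s = y \<otimes> c"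
      and abC: "\<forall>u\<in>Cset C0 k h. \<forall>v\<in>Cset C0 k h. u \<otimes> v = v \<otimes> u"
      and KC: "Kset k h \<inter> Cset C0 k h \<subseteq> M" using g unfolding good_def by blast+
    define h' where "h' = ext_h k h x y"
    have hs': "symp S (Suc k) h'" unfolding h'_def
      by (rule step_symp[OF hs C0S xy(1,2,3,4,5) xc yc comm C0c])
    note Kp = Kset_props[OF hs C0c]
    define K where "K = Kset k h"
    define K1 where "K1 = generate G (K \<union> {x})"
    have K1eq: "K1 = {k0 \<otimes> x [^] i | k0 i. k0 \<in> K \<and> i < p}"
      unfolding K1_def K_def by (rule ext2[OF Kp(1) Kp(2) xc])
    have K1sub: "subgroup K1 G" unfolding K1_def K_def by (rule ext2_sub[OF Kp(1) Kp(2) xc])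
    have KK1: "K \<subseteq> K1" unfolding K1_def by (auto intro: generate.incl)
    have MK1: "M \<subseteq> K1" using Kp(2) KK1 K_def by blast
    have K'eq: "generate G (K1 \<union> {y}) = {k1 \<otimes> y [^] j | k1 j. k1 \<in> K1 \<and> j < p}"
      by (rule ext2[OF K1sub MK1 yc])
    have Kseq: "Kset (Suc k) h' = generate G (K1 \<union> {y})"
    proof -
      have Kc: "M \<union> h ` {1..2*k} \<subseteq> carrier G" using Zsub symp_c[OF hs C0c] by blast
      have "M \<union> h' ` {1..2 * Suc k} = ((M \<union> h ` {1..2*k}) \<union> {x}) \<union> {y}"
        unfolding h'_def ext_h_img by blast
      then have "Kset (Suc k) h' = generate G (((M \<union> h ` {1..2*k}) \<union> {x}) \<union> {y})"
        unfolding Kset_def by simp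
      also have "\<dots> = generate G (generate G ((M \<union> h ` {1..2*k}) \<union> {x}) \<union> {y})"
        using gen_gen_un[of "(M \<union> h ` {1..2*k}) \<union> {x}" "{y}"] Kc xc yc by simp
      also have "generate G ((M \<union> h ` {1..2*k}) \<union> {x}) = K1"
        unfolding K1_def K_def Kset_def using gen_gen_un[of "M \<union> h ` {1..2*k}" "{x}"] Kc xc by simp
      finally show ?thesis .
    qed
    define K' where "K' = Kset (Suc k) h'"
    have K'sub: "subgroup K' G" unfolding K'_def Kseq by (rule ext2_sub[OF K1sub MK1 yc])
    have K1K': "K1 \<subseteq> K'" unfolding K'_def Kseq by (auto intro: generate.incl)
    have xK': "x \<in> K'" using K1K' unfolding K1_def by (auto intro: generate.incl)
    have yK': "y \<in> K'" unfolding K'_def Kseq by (auto intro: generate.incl)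
    have KK': "K \<subseteq> K'" using KK1 K1K' by blast
    have Ceq: "Cset S (Suc k) h' = Cset C0 k h"
    proof -
      have "(\<forall>i\<in>{1..2 * Suc k}. s \<otimes> h' i = h' i \<otimes> s) \<longleftrightarrow> (\<forall>w\<in>h' ` {1..2 * Suc k}. s \<otimes> w = w \<otimes> s)" for s
        by blast
      then have "Cset S (Suc k) h' = {s. s \<in> S \<and> (\<forall>w\<in>{x, y} \<union> h ` {1..2*k}. s \<otimes> w = w \<otimes> s)}"
        unfolding Cset_def h'_def ext_h_img by simp
      also have "\<dots> = Cset C0 k h" unfolding Cset_def C0_def centr_def using Scar by blast
      finally show ?thesis .
    qed
    have KC0: "K \<subseteq> C0"
    proof -
      have "M \<union> h ` {1..2*k} \<subseteq> C0" using MC0 hs unfolding symp_def by blast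
      then show ?thesis unfolding K_def Kset_def by (rule generate_subgroup_incl[OF _ C0sub])
    qed
    have part_dec: "\<forall>s\<in>S. \<exists>y'\<in>Kset (Suc k) h'. \<exists>c\<in>Cset S (Suc k) h'. s = y' \<otimes> c"
    proof
      fix s assume s: "s \<in> S"
      have sc: "s \<in> carrier G" using s Scar by blast
      obtain i j where ij: "(s \<otimes> y [^] j \<otimes> x [^] (i::nat)) \<otimes> x = x \<otimes> (s \<otimes> y [^] (j::nat) \<otimes> x [^] i)"
          "(s \<otimes> y [^] j \<otimes> x [^] i) \<otimes> y = y \<otimes> (s \<otimes> y [^] j \<otimes> x [^] i)"
        using decomp_xy[OF xc yc xy(5) sc] by blast
      define c' where "c' = s \<otimes> y [^] j \<otimes> x [^] i"
      have c'S: "c' \<in> S" unfolding c'_def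
        using subgroup.m_closed[OF S(1) subgroup.m_closed[OF S(1) s sub_pow_closed[OF S(1) xy(2)]]
          sub_pow_closed[OF S(1) xy(1)]] .
      have c'c: "c' \<in> carrier G" using c'S Scar by blast
      have c'C0: "c' \<in> C0" unfolding C0_def centr_def using c'S c'c ij unfolding c'_def by auto
      obtain k0 c where kc: "k0 \<in> Kset k h" "c \<in> Cset C0 k h" "c' = k0 \<otimes> c" using dec c'C0 by blast
      have k0c: "k0 \<in> carrier G" using kc(1) Kp(1) subgroup.subset by blast
      have cC0: "c \<in> C0" using kc(2) unfolding Cset_def by blast
      have cc: "c \<in> carrier G" using cC0 C0c by blast
      define w where "w = inv (x [^] i) \<otimes> inv (y [^] j)"
      have wc: "w \<in> carrier G" unfolding w_def using xc yc by simp
      have wK': "w \<in> K'" unfolding w_def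
        using subgroup.m_closed[OF K'sub subgroup.m_inv_closed[OF K'sub sub_pow_closed[OF K'sub xK']]
          subgroup.m_inv_closed[OF K'sub sub_pow_closed[OF K'sub yK']]] .
      have cw: "c \<otimes> w = w \<otimes> c"
      proof -
        have gs: "subgroup (generate G {x, y}) G" using generate_is_subgroup[of "{x, y}"] xc yc by simp
        have gx: "x \<in> generate G {x, y}" by (rule generate.incl) simp
        have gy: "y \<in> generate G {x, y}" by (rule generate.incl) simp
        have wg: "w \<in> generate G {x, y}" unfolding w_def
          using subgroup.m_closed[OF gs subgroup.m_inv_closed[OF gs sub_pow_closed[OF gs gx]]
            subgroup.m_inv_closed[OF gs sub_pow_closed[OF gs gy]]] .
        have cz: "\<forall>z\<in>{x, y}. c \<otimes> z = z \<otimes> c" using comm cC0 by blast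
        have xyc: "{x, y} \<subseteq> carrier G" using xc yc by simp
        show ?thesis by (rule comm_gen[OF cc xyc cz wg])
      qed
      have "s = c' \<otimes> w" unfolding c'_def w_def using sc xc yc by (simp add: m_assoc)
      also have "\<dots> = k0 \<otimes> (c \<otimes> w)" using kc k0c cc wc by (simp add: m_assoc)
      also have "\<dots> = (k0 \<otimes> w) \<otimes> c" using cw k0c cc wc by (simp add: m_assoc)
      finally have "s = (k0 \<otimes> w) \<otimes> c" .
      moreover have "k0 \<otimes> w \<in> Kset (Suc k) h'"
        using subgroup.m_closed[OF K'sub] KK' kc(1) wK' unfolding K_def K'_def by blast
      moreover have "c \<in> Cset S (Suc k) h'" using kc(2) Ceq by simp
      ultimately show "\<exists>y'\<in>Kset (Suc k) h'. \<exists>c\<in>Cset S (Suc k) h'. s = y' \<otimes> c" by blast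
    qed
    have part_int: "Kset (Suc k) h' \<inter> Cset S (Suc k) h' \<subseteq> M"
    proof
      fix z assume z: "z \<in> Kset (Suc k) h' \<inter> Cset S (Suc k) h'"
      then have zC: "z \<in> Cset C0 k h" using Ceq by simp
      have zC0: "z \<in> C0" using zC unfolding Cset_def by blast
      obtain k1 j where kj: "k1 \<in> K1" "j < p" "z = k1 \<otimes> y [^] j" using z Kseq K'eq by auto
      obtain k0 i where ki: "k0 \<in> K" "i < p" "k1 = k0 \<otimes> x [^] i" using kj K1eq by auto
      have k0c: "k0 \<in> carrier G" using ki KC0 C0c by blast
      define u where "u = x [^] i \<otimes> y [^] j"
      have uc: "u \<in> carrier G" unfolding u_def using xc yc by simp
      have zu: "z = k0 \<otimes> u" unfolding u_def using kj ki k0c xc yc by (simp add: m_assoc)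
      have uC0: "u \<in> C0"
      proof -
        have "u = inv k0 \<otimes> z" using zu k0c uc by simp
        then show ?thesis using subgroup.m_closed[OF C0sub subgroup.m_inv_closed[OF C0sub] zC0] ki KC0 by auto
      qed
      have "u \<otimes> x = x \<otimes> u" using comm uC0 by blast
      then have "cm x u = \<one>" using cm_eq1[OF xc uc] by simp
      moreover have "cm x u = cm x (x [^] i) \<otimes> cm x (y [^] j)"
        unfolding u_def using cm_mult_right xc yc by simp
      moreover have "cm x (x [^] i) = \<one>" using cm_pow_right[OF xc xc] cm_self[OF xc] by simp
      moreover have "cm x (y [^] j) = a [^] j" using cm_pow_right[OF xc yc] xy(5) by simp
      ultimately have "a [^] j = \<one>" using ac by simp
      then have j0: "j = 0" using a_pow_eq1 kj(2) by (metis dvd_imp_le not_le neq0_conv)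
      have "u \<otimes> y = y \<otimes> u" using comm uC0 by blast
      then have "cm u y = \<one>" using cm_eq1[OF uc yc] by simp
      moreover have "u = x [^] i" unfolding u_def using j0 xc by simp
      moreover have "cm (x [^] i) y = a [^] i" using cm_pow_left[OF xc yc] xy(5) by simp
      ultimately have "a [^] i = \<one>" by simp
      then have i0: "i = 0" using a_pow_eq1 ki(2) by (metis dvd_imp_le not_le neq0_conv)
      have "z = k0" using zu i0 j0 k0c unfolding u_def by simp
      then have "z \<in> Kset k h \<inter> Cset C0 k h" using ki(1) zC K_def by simp
      then show "z \<in> M" using KC by blast
    qed
    have "good S (Suc k) h'" unfolding good_def using hs' part_dec part_int abC Ceq by simp
    then show ?thesis by blast
  qed
qed

end


context chern begin

primrec indep :: "'a list \<Rightarrow> bool" where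
  "indep [] = True"
| "indep (r # rs) = (r \<notin> generate G (M \<union> set rs) \<and> indep rs)"

lemma gen_swap:
  assumes T: "subgroup T G" "M \<subseteq> T" and m: "m \<in> M" and t: "t \<in> carrier G"
  shows "generate G (T \<union> {t \<otimes> m}) = generate G (T \<union> {t})"
proof -
  have mc: "m \<in> carrier G" using m Mc by blast
  have Tc: "T \<subseteq> carrier G" by (rule subgroup.subset[OF T(1)])
  have s1: "subgroup (generate G (T \<union> {t})) G" using Tc t by (intro generate_is_subgroup) auto
  have s2: "subgroup (generate G (T \<union> {t \<otimes> m})) G" using Tc t mc by (intro generate_is_subgroup) auto
  have a1: "T \<subseteq> generate G (T \<union> {t})" "t \<in> generate G (T \<union> {t})" by (auto intro: generate.incl)
  have a2: "T \<subseteq> generate G (T \<union> {t \<otimes> m})" "t \<otimes> m \<in> generate G (T \<union> {t \<otimes> m})"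
    by (auto intro: generate.incl)
  have "t \<otimes> m \<in> generate G (T \<union> {t})" using subgroup.m_closed[OF s1 a1(2)] a1(1) m T(2) by blast
  then have i1: "T \<union> {t \<otimes> m} \<subseteq> generate G (T \<union> {t})" using a1 by blast
  have tm: "t = (t \<otimes> m) \<otimes> inv m" using t mc by (simp add: m_assoc)
  have im: "inv m \<in> generate G (T \<union> {t \<otimes> m})"
    using subgroup.m_inv_closed[OF T(1)] m T(2) a2(1) by blast
  have "(t \<otimes> m) \<otimes> inv m \<in> generate G (T \<union> {t \<otimes> m})" by (rule subgroup.m_closed[OF s2 a2(2) im])
  then have "t \<in> generate G (T \<union> {t \<otimes> m})" by (subst tm)
  then have i2: "T \<union> {t} \<subseteq> generate G (T \<union> {t \<otimes> m})" using a2 by blast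
  show ?thesis
    using generate_subgroup_incl[OF i1 s1] generate_subgroup_incl[OF i2 s2] by blast
qed

lemma phase2_list:
  assumes C: "subgroup C G" "M \<subseteq> C"
  shows "set L \<subseteq> C \<Longrightarrow> \<exists>rs. set rs \<subseteq> C \<and> (\<forall>r\<in>set rs. r [^] p = \<one>)
           \<and> generate G (M \<union> set rs) = generate G (M \<union> set L) \<and> indep rs"
proof (induct L)
  case Nil then show ?case by (intro exI[of _ "[]"]) simp
next
  case (Cons t L)
  have Cc: "C \<subseteq> carrier G" by (rule subgroup.subset[OF C(1)])
  have tC: "t \<in> C" and LC: "set L \<subseteq> C" using Cons.prems by auto
  have tc: "t \<in> carrier G" using tC Cc by blast
  obtain rs where rs: "set rs \<subseteq> C" "\<forall>r\<in>set rs. r [^] p = \<one>"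
      "generate G (M \<union> set rs) = generate G (M \<union> set L)" "indep rs" using Cons.hyps[OF LC] by blast
  define T where "T = generate G (M \<union> set rs)"
  have MLc: "M \<union> set L \<subseteq> carrier G" using Zsub LC Cc by blast
  have Tsub: "subgroup T G" unfolding T_def using Zsub rs(1) Cc by (intro generate_is_subgroup) auto
  have MT: "M \<subseteq> T" unfolding T_def by (auto intro: generate.incl)
  have eqL: "generate G (M \<union> set (t # L)) = generate G (T \<union> {t})"
  proof -
    have "M \<union> set (t # L) = (M \<union> set L) \<union> {t}" by auto
    then have "generate G (M \<union> set (t # L)) = generate G ((M \<union> set L) \<union> {t})" by simp
    also have "\<dots> = generate G (generate G (M \<union> set L) \<union> {t})"
      using gen_gen_un[OF MLc, of "{t}"] tc by simp
    finally show ?thesis unfolding T_def rs(3) .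
  qed
  show ?case
  proof (cases "t \<in> T")
    case True
    have "T \<union> {t} = T" using True by blast
    then have "generate G (M \<union> set (t # L)) = T" using eqL gen_subgroup[OF Tsub] by simp
    then show ?thesis using rs T_def by auto
  next
    case False
    obtain m where m: "m \<in> M" "(t \<otimes> m) [^] p = \<one>" using adjust[OF tc] by blast
    have mc: "m \<in> carrier G" using m Mc by blast
    define t' where "t' = t \<otimes> m"
    have t'C: "t' \<in> C" unfolding t'_def using subgroup.m_closed[OF C(1) tC] m C(2) by blast
    have t'T: "t' \<notin> T"
    proof
      assume "t' \<in> T"
      moreover have "inv m \<in> T" using subgroup.m_inv_closed[OF Tsub] m MT by blast
      ultimately have "t' \<otimes> inv m \<in> T" using subgroup.m_closed[OF Tsub] by blast
      moreover have "t' \<otimes> inv m = t" unfolding t'_def using tc mc by (simp add: m_assoc)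
      ultimately show False using False by simp
    qed
    have eqR: "generate G (M \<union> set (t' # rs)) = generate G (T \<union> {t'})"
    proof -
      have Mrc: "M \<union> set rs \<subseteq> carrier G" using Zsub rs(1) Cc by blast
      have t'c: "t' \<in> carrier G" using t'C Cc by blast
      have "M \<union> set (t' # rs) = (M \<union> set rs) \<union> {t'}" by auto
      then have "generate G (M \<union> set (t' # rs)) = generate G ((M \<union> set rs) \<union> {t'})" by simp
      also have "\<dots> = generate G (T \<union> {t'})"
        unfolding T_def using gen_gen_un[OF Mrc, of "{t'}"] t'c by simp
      finally show ?thesis .
    qed
    have "generate G (T \<union> {t'}) = generate G (T \<union> {t})"
      unfolding t'_def by (rule gen_swap[OF Tsub MT m(1) tc])
    then have "generate G (M \<union> set (t' # rs)) = generate G (M \<union> set (t # L))"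
      using eqR eqL by simp
    moreover have "set (t' # rs) \<subseteq> C" using t'C rs(1) by simp
    moreover have "\<forall>r\<in>set (t' # rs). r [^] p = \<one>" using rs(2) m(2) t'_def by simp
    moreover have "indep (t' # rs)" using t'T rs(4) T_def by simp
    ultimately show ?thesis by blast
  qed
qed

lemma phase2:
  assumes C: "subgroup C G" "M \<subseteq> C"
  shows "\<exists>rs. set rs \<subseteq> C \<and> (\<forall>r\<in>set rs. r [^] p = \<one>) \<and> generate G (M \<union> set rs) = C \<and> indep rs"
proof -
  have Cc: "C \<subseteq> carrier G" by (rule subgroup.subset[OF C(1)])
  define F where "F = {M #> c | c. c \<in> C}"
  have fF: "finite F" unfolding F_def by (rule coset_fin[OF Cc])
  define rep where "rep Q = (SOME c. c \<in> C \<and> Q = M #> c)" for Q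
  have rep: "rep Q \<in> C \<and> Q = M #> rep Q" if "Q \<in> F" for Q
  proof -
    have "\<exists>c. c \<in> C \<and> Q = M #> c" using that unfolding F_def by blast
    then show ?thesis unfolding rep_def by (rule someI_ex)
  qed
  define T where "T = rep ` F"
  have fT: "finite T" unfolding T_def using fF by simp
  obtain L where L: "set L = T" using finite_list[OF fT] by blast
  have TC: "T \<subseteq> C" unfolding T_def using rep by blast
  have MLc: "M \<union> set L \<subseteq> carrier G" using Zsub L TC Cc by blast
  have gsub: "subgroup (generate G (M \<union> set L)) G" by (rule generate_is_subgroup[OF MLc])
  have "generate G (M \<union> set L) = C"
  proof
    show "generate G (M \<union> set L) \<subseteq> C"
      using generate_subgroup_incl[of "M \<union> set L" C] C L TC by blast
    show "C \<subseteq> generate G (M \<union> set L)"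
    proof
      fix c assume c: "c \<in> C"
      have cc: "c \<in> carrier G" using c Cc by blast
      have Q: "M #> c \<in> F" unfolding F_def using c by blast
      obtain r0 where r0: "r0 = rep (M #> c)" by blast
      have r: "r0 \<in> C" "M #> c = M #> r0" using rep[OF Q] r0 by auto
      have "c \<in> M #> r0" using r(2) rcos_self[OF cc Msub] by simp
      then obtain m where m: "m \<in> M" "c = m \<otimes> r0" unfolding r_coset_def by blast
      have g1: "m \<in> generate G (M \<union> set L)" using m by (auto intro: generate.incl)
      have "r0 \<in> T" unfolding T_def r0 using Q by blast
      then have g2: "r0 \<in> generate G (M \<union> set L)" using L by (auto intro: generate.incl)
      show "c \<in> generate G (M \<union> set L)" unfolding m(2) by (rule subgroup.m_closed[OF gsub g1 g2])
    qed
  qed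
  then show ?thesis using phase2_list[OF C, of L] L TC by auto
qed

end


context chern begin

lemma Hfacts:
  assumes C: "subgroup C G" and ab: "\<forall>u\<in>C. \<forall>v\<in>C. u \<otimes> v = v \<otimes> u"
  shows "set rs \<subseteq> C \<Longrightarrow> \<forall>r\<in>set rs. r [^] p = \<one> \<Longrightarrow> indep rs \<Longrightarrow>
     finite (generate G (set rs)) \<and> card (generate G (set rs)) = p ^ length rs
     \<and> M \<inter> generate G (set rs) \<subseteq> {\<one>}"
proof (induct rs)
  case Nil
  have "generate G {} = {\<one>}" using generate_empty by simp
  then show ?case by simp
next
  case (Cons r rs)
  have Cc: "C \<subseteq> carrier G" by (rule subgroup.subset[OF C])
  have rC: "r \<in> C" and rsC: "set rs \<subseteq> C" using Cons.prems by auto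
  have rc: "r \<in> carrier G" using rC Cc by blast
  have rp: "r [^] p = \<one>" using Cons.prems by simp
  have IH: "finite (generate G (set rs)) \<and> card (generate G (set rs)) = p ^ length rs
     \<and> M \<inter> generate G (set rs) \<subseteq> {\<one>}" using Cons.hyps Cons.prems by simp
  define S where "S = generate G (set rs)"
  have rsc: "set rs \<subseteq> carrier G" using rsC Cc by blast
  have Ssub: "subgroup S G" unfolding S_def by (rule generate_is_subgroup[OF rsc])
  have SC: "S \<subseteq> C" unfolding S_def by (rule generate_subgroup_incl[OF rsC C])
  have eq: "generate G (set (r # rs)) = generate G (S \<union> {r})"
    unfolding S_def using gen_gen_un[OF rsc, of "{r}"] rc by (simp add: insert_commute)
  have norm: "\<forall>s\<in>S. r \<otimes> s \<otimes> inv r \<in> S \<and> inv r \<otimes> s \<otimes> r \<in> S"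
  proof
    fix s assume s: "s \<in> S"
    have sc: "s \<in> carrier G" using s SC Cc by blast
    have e: "r \<otimes> s = s \<otimes> r" using ab rC s SC by blast
    have "r \<otimes> s \<otimes> inv r = s" using e rc sc by (simp add: m_assoc)
    moreover have "inv r \<otimes> s \<otimes> r = s" using e[symmetric] rc sc by (simp add: m_assoc)
    ultimately show "r \<otimes> s \<otimes> inv r \<in> S \<and> inv r \<otimes> s \<otimes> r \<in> S" using s by simp
  qed
  have rpS: "r [^] p \<in> S" using rp subgroup.one_closed[OF Ssub] by simp
  define T where "T = generate G (M \<union> set rs)"
  have Tsub: "subgroup T G" unfolding T_def using Zsub rsc by (intro generate_is_subgroup) auto
  have ST: "S \<subseteq> T" unfolding S_def T_def by (rule mono_generate) blast
  have MT: "M \<subseteq> T" unfolding T_def by (auto intro: generate.incl)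
  have rT: "r \<notin> T" using Cons.prems unfolding T_def by simp
  have rS: "r \<notin> S" using rT ST by blast
  have fin: "finite S" using IH S_def by simp
  have c1: "finite (generate G (S \<union> {r}))" "card (generate G (S \<union> {r})) = p * card S"
    using ext_card[OF Ssub rc p rpS norm rS fin] by auto
  have gen_eq: "generate G (S \<union> {r}) = {s \<otimes> r [^] j | s j. s \<in> S \<and> j < p}"
    by (rule ext_gen[OF Ssub rc p1 rpS norm])
  have Mint: "M \<inter> generate G (S \<union> {r}) \<subseteq> {\<one>}"
  proof
    fix z assume z: "z \<in> M \<inter> generate G (S \<union> {r})"
    then obtain s j where sj: "s \<in> S" "j < p" "z = s \<otimes> r [^] j" using gen_eq by blast
    have sc: "s \<in> carrier G" using sj SC Cc by blast
    have j0: "j = 0"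
    proof (rule ccontr)
      assume "j \<noteq> 0"
      have "r [^] j = inv s \<otimes> z" using sj sc rc by (simp add: m_assoc[symmetric])
      moreover have "inv s \<in> T" using subgroup.m_inv_closed[OF Ssub sj(1)] ST by blast
      moreover have "z \<in> T" using z MT by blast
      ultimately have "r [^] j \<in> T" using subgroup.m_closed[OF Tsub] by simp
      moreover have "r [^] p \<in> T" using rp subgroup.one_closed[OF Tsub] by simp
      ultimately have "r \<in> T" using pow_in_sub[OF Tsub rc p] \<open>j \<noteq> 0\<close> sj(2) by blast
      then show False using rT by simp
    qed
    have "z = s" using sj j0 sc by simp
    then have "z \<in> M \<inter> generate G (set rs)" using z sj S_def by blast
    then show "z \<in> {\<one>}" using IH by blast
  qed
  show ?case using c1 Mint IH eq S_def by simp
qed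

lemma H_exp:
  assumes C: "subgroup C G" and ab: "\<forall>u\<in>C. \<forall>v\<in>C. u \<otimes> v = v \<otimes> u"
    and rsC: "set rs \<subseteq> C" and rp: "\<forall>r\<in>set rs. r [^] p = \<one>"
    and y: "y \<in> generate G (set rs)"
  shows "y [^] p = \<one>"
proof -
  have Cc: "C \<subseteq> carrier G" by (rule subgroup.subset[OF C])
  have HC: "generate G (set rs) \<subseteq> C" by (rule generate_subgroup_incl[OF rsC C])
  from y show ?thesis
  proof (induct rule: generate.induct)
    case one then show ?case by simp
  next
    case (incl h) then show ?case using rp by simp
  next
    case (inv h)
    have hc: "h \<in> carrier G" using inv rsC Cc by blast
    show ?case using rp inv nat_pow_inv[OF hc] by simp
  next
    case (eng h1 h2)
    have h12: "h1 \<in> C" "h2 \<in> C" using eng HC by auto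
    have hc: "h1 \<in> carrier G" "h2 \<in> carrier G" using h12 Cc by auto
    have "h1 \<otimes> h2 = h2 \<otimes> h1" using ab h12 by blast
    then have "(h1 \<otimes> h2) [^] p = h1 [^] p \<otimes> h2 [^] p" using pow_mult_distrib hc by blast
    then show ?case using eng by simp
  qed
qed

lemma MH_decomp:
  assumes rsc: "set rs \<subseteq> carrier G"
  shows "generate G (M \<union> set rs) \<subseteq> {m \<otimes> y | m y. m \<in> M \<and> y \<in> generate G (set rs)}"
proof -
  let ?H = "generate G (set rs)"
  let ?P = "{m \<otimes> y | m y. m \<in> M \<and> y \<in> ?H}"
  have Hs: "subgroup ?H G" by (rule generate_is_subgroup[OF rsc])
  have Hc: "\<And>y. y \<in> ?H \<Longrightarrow> y \<in> carrier G" using subgroup.subset[OF Hs] by blast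
  have Psub: "subgroup ?P G"
  proof (rule subgroupI)
    show "?P \<subseteq> carrier G" using Mc Hc by blast
    show "?P \<noteq> {}" using subgroup.one_closed[OF Msub] subgroup.one_closed[OF Hs] by blast
  next
    fix z assume "z \<in> ?P"
    then obtain m y where my: "m \<in> M" "y \<in> ?H" "z = m \<otimes> y" by blast
    have mc: "m \<in> carrier G" and yc: "y \<in> carrier G" using my Mc Hc by auto
    have "inv z = inv m \<otimes> inv y"
      using my mc yc Zcent[OF subgroup.m_inv_closed[OF Msub my(1)] inv_closed[OF yc]]
      by (simp add: inv_mult_group)
    moreover have "inv m \<in> M" "inv y \<in> ?H"
      using subgroup.m_inv_closed[OF Msub my(1)] subgroup.m_inv_closed[OF Hs my(2)] by auto
    ultimately show "inv z \<in> ?P" by blast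
  next
    fix z w assume "z \<in> ?P" "w \<in> ?P"
    then obtain m y m' y' where my: "m \<in> M" "y \<in> ?H" "z = m \<otimes> y" "m' \<in> M" "y' \<in> ?H" "w = m' \<otimes> y'"
      by blast
    have c: "m \<in> carrier G" "y \<in> carrier G" "m' \<in> carrier G" "y' \<in> carrier G" using my Mc Hc by auto
    have "z \<otimes> w = m \<otimes> (y \<otimes> m') \<otimes> y'" using my c by (simp add: m_assoc)
    also have "y \<otimes> m' = m' \<otimes> y" using Zcent[OF my(4) c(2)] by simp
    also have "m \<otimes> (m' \<otimes> y) \<otimes> y' = (m \<otimes> m') \<otimes> (y \<otimes> y')" using c by (simp add: m_assoc)
    finally have "z \<otimes> w = (m \<otimes> m') \<otimes> (y \<otimes> y')" .
    moreover have "m \<otimes> m' \<in> M" "y \<otimes> y' \<in> ?H"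
      using subgroup.m_closed[OF Msub my(1,4)] subgroup.m_closed[OF Hs my(2,5)] by auto
    ultimately show "z \<otimes> w \<in> ?P" by blast
  qed
  have "M \<union> set rs \<subseteq> ?P"
  proof
    fix z assume "z \<in> M \<union> set rs"
    then show "z \<in> ?P"
    proof
      assume zM: "z \<in> M"
      have "z = z \<otimes> \<one>" using zM Mc by simp
      then show ?thesis using zM subgroup.one_closed[OF Hs] by blast
    next
      assume zr: "z \<in> set rs"
      have "z = \<one> \<otimes> z" using zr rsc by auto
      moreover have "z \<in> ?H" using zr by (auto intro: generate.incl)
      ultimately show ?thesis using subgroup.one_closed[OF Msub] by blast
    qed
  qed
  then show ?thesis by (rule generate_subgroup_incl[OF _ Psub])
qed

end


context group begin
lemma ord_sub: assumes S: "subgroup S G" and x: "x \<in> S"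
  shows "group.ord (G\<lparr>carrier := S\<rparr>) x = ord x"
proof -
  have gS: "group (G\<lparr>carrier := S\<rparr>)" by (rule subgroup_imp_group[OF S])
  have "\<And>n::nat. x [^]\<^bsub>G\<lparr>carrier := S\<rparr>\<^esub> n = x [^] n" using nat_pow_consistent by simp
  then show ?thesis unfolding group.ord_def[OF gS] ord_def by simp
qed
end

context chern begin

lemma chern_main:
  assumes Mqc: "G\<lparr>carrier := M\<rparr> \<cong> prufer_group p"
  shows "\<exists>k l KS HS. is_G_k p k (G\<lparr>carrier := KS\<rparr>) \<and> elementary_abelian_rank p l (G\<lparr>carrier := HS\<rparr>)
     \<and> G \<cong> G\<lparr>carrier := KS\<rparr> \<times>\<times> G\<lparr>carrier := HS\<rparr>"
proof -
  have Gsub: "subgroup (carrier G) G" by (rule subgroup_self)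
  obtain k h where g: "good (carrier G) k h" using phase1[OF Gsub Zsub] by blast
  have hs: "symp (carrier G) k h" and dec: "\<forall>s\<in>carrier G. \<exists>y\<in>Kset k h. \<exists>c\<in>Cset (carrier G) k h. s = y \<otimes> c"
    and abC: "\<forall>u\<in>Cset (carrier G) k h. \<forall>v\<in>Cset (carrier G) k h. u \<otimes> v = v \<otimes> u"
    and KC: "Kset k h \<inter> Cset (carrier G) k h \<subseteq> M" using g unfolding good_def by blast+
  define KS where "KS = Kset k h"
  define CS where "CS = Cset (carrier G) k h"
  note Kp = Kset_props[OF hs subset_refl]
  have Csub: "subgroup CS G" unfolding CS_def by (rule Cset_sub[OF Gsub hs])
  have MC: "M \<subseteq> CS" unfolding CS_def by (rule M_Cset[OF Zsub hs subset_refl])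
  have CSc: "CS \<subseteq> carrier G" by (rule subgroup.subset[OF Csub])
  have KSc: "KS \<subseteq> carrier G" unfolding KS_def by (rule subgroup.subset[OF Kp(1)])
  obtain rs where rs: "set rs \<subseteq> CS" "\<forall>r\<in>set rs. r [^] p = \<one>" "generate G (M \<union> set rs) = CS" "indep rs"
    using phase2[OF Csub MC] by blast
  define HS where "HS = generate G (set rs)"
  have abC': "\<forall>u\<in>CS. \<forall>v\<in>CS. u \<otimes> v = v \<otimes> u" using abC CS_def by simp
  have Hf: "finite HS" "card HS = p ^ length rs" "M \<inter> HS \<subseteq> {\<one>}"
    using Hfacts[OF Csub abC' rs(1) rs(2) rs(4)] unfolding HS_def by auto
  have rsc: "set rs \<subseteq> carrier G" using rs(1) CSc by blast
  have Hsub: "subgroup HS G" unfolding HS_def by (rule generate_is_subgroup[OF rsc])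
  have HC: "HS \<subseteq> CS" unfolding HS_def by (rule generate_subgroup_incl[OF rs(1) Csub])
  have HSc: "HS \<subseteq> carrier G" using HC CSc by blast
  define K where "K = G\<lparr>carrier := KS\<rparr>"
  define H where "H = G\<lparr>carrier := HS\<rparr>"
  have grK: "group K" unfolding K_def KS_def by (rule subgroup_imp_group[OF Kp(1)])
  have grH: "group H" unfolding H_def by (rule subgroup_imp_group[OF Hsub])
  have HKcomm: "v \<otimes> u = u \<otimes> v" if v: "v \<in> HS" and u: "u \<in> KS" for u v
  proof -
    have vC: "v \<in> CS" using v HC by blast
    have vc: "v \<in> carrier G" using vC CSc by blast
    have "\<forall>i\<in>{1..2*k}. v \<otimes> h i = h i \<otimes> v" using vC unfolding CS_def Cset_def by blast
    then show ?thesis using Kset_comm[OF hs subset_refl vc] u KS_def by blast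
  qed
  have isG: "is_G_k p k K"
  proof -
    have MK: "M \<subseteq> KS" using Kp(2) KS_def by simp
    have qcK: "quasi_cyclic_subgroup p K M"
      unfolding quasi_cyclic_subgroup_def K_def
      using subgroup_incl[OF Msub Kp(1) Kp(2)] Mqc KS_def by simp
    have ordK: "group.ord K x = ord x" if "x \<in> KS" for x
      unfolding K_def by (rule ord_sub[OF Kp(1)[folded KS_def] that])
    have aK: "a \<in> M \<and> group.ord K a = p" using aM ordK MK ord_a by auto
    have hK: "h i \<in> carrier K \<and> group.ord K (h i) = p \<and> (\<forall>m\<in>M. h i \<otimes>\<^bsub>K\<^esub> m = m \<otimes>\<^bsub>K\<^esub> h i)"
      if i: "i \<in> {1..2*k}" for i
    proof -
      have hi: "h i \<in> KS" using Kp(3)[OF i] KS_def by simp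
      have hc: "h i \<in> carrier G" using hi KSc by blast
      have hp: "h i [^] p = \<one>" "h i \<notin> M" using hs i unfolding symp_def by auto
      have "ord (h i) dvd p" using pow_eq_id[OF hc] hp by blast
      moreover have "ord (h i) \<noteq> 1" using ord_eq_1[OF hc] hp subgroup.one_closed[OF Msub] by auto
      ultimately have "ord (h i) = p" using p by (metis prime_nat_iff)
      moreover have "\<forall>m\<in>M. h i \<otimes> m = m \<otimes> h i"
      proof
        fix m assume "m \<in> M" then show "h i \<otimes> m = m \<otimes> h i" using Zcent[OF _ hc] by simp
      qed
      ultimately show ?thesis using hi ordK[OF hi] unfolding K_def by simp
    qed
    have cmK: "commutator K u v = cm u v" if "u \<in> KS" "v \<in> KS" for u v
      unfolding commutator_def K_def using m_inv_consistent[OF Kp(1)[folded KS_def]] that by simp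
    have relK: "\<forall>i\<in>{1..2*k}. \<forall>j\<in>{1..2*k}. i < j \<longrightarrow>
          commutator K (h i) (h j) = (if j = k + i then a else \<one>\<^bsub>K\<^esub>)"
    proof (intro ballI impI)
      fix i j assume ij: "i \<in> {1..2*k}" "j \<in> {1..2*k}" "i < j"
      have "commutator K (h i) (h j) = cm (h i) (h j)"
        using cmK Kp(3) ij KS_def by simp
      also have "\<dots> = (if j = k + i then a else \<one>)" using hs ij unfolding symp_def by blast
      finally show "commutator K (h i) (h j) = (if j = k + i then a else \<one>\<^bsub>K\<^esub>)"
        unfolding K_def by simp
    qed
    have genK: "carrier K = generate K (M \<union> h ` {1..2*k})"
    proof -
      have sub: "M \<union> h ` {1..2*k} \<subseteq> KS" using MK Kp(3) KS_def by auto
      have "generate K (M \<union> h ` {1..2*k}) = generate G (M \<union> h ` {1..2*k})"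
        unfolding K_def by (rule generate_consistent[OF sub Kp(1)[folded KS_def]])
      then show ?thesis unfolding K_def KS_def Kset_def by simp
    qed
    show ?thesis unfolding is_G_k_def using grK qcK aK hK relK genK by blast
  qed
  have eaH: "elementary_abelian_rank p (length rs) H"
  proof -
    have "comm_group H"
    proof (rule group.group_comm_groupI[OF grH])
      fix x y assume "x \<in> carrier H" "y \<in> carrier H"
      then have "x \<in> CS" "y \<in> CS" using HC unfolding H_def by auto
      then show "x \<otimes>\<^bsub>H\<^esub> y = y \<otimes>\<^bsub>H\<^esub> x" using abC' unfolding H_def by simp
    qed
    moreover have "\<forall>x\<in>carrier H. x [^]\<^bsub>H\<^esub> p = \<one>\<^bsub>H\<^esub>"
    proof
      fix x assume "x \<in> carrier H"
      then have "x \<in> HS" unfolding H_def by simp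
      then have "x [^] p = \<one>" using H_exp[OF Csub abC' rs(1) rs(2)] HS_def by blast
      then show "x [^]\<^bsub>H\<^esub> p = \<one>\<^bsub>H\<^esub>" unfolding H_def using nat_pow_consistent by simp
    qed
    ultimately show ?thesis unfolding elementary_abelian_rank_def elementary_abelian_def H_def
      using Hf by simp
  qed
  define phi where "phi = (\<lambda>(u, v). u \<otimes> v)"
  have hom: "phi \<in> hom (K \<times>\<times> H) G"
  proof (rule homI)
    fix z assume "z \<in> carrier (K \<times>\<times> H)"
    then show "phi z \<in> carrier G" unfolding phi_def K_def H_def DirProd_def using KSc HSc by auto
  next
    fix z w assume z: "z \<in> carrier (K \<times>\<times> H)" and w: "w \<in> carrier (K \<times>\<times> H)"
    obtain u v u' v' where zw: "z = (u, v)" "w = (u', v')" by (cases z, cases w) auto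
    have m: "u \<in> KS" "v \<in> HS" "u' \<in> KS" "v' \<in> HS" using z w zw unfolding K_def H_def DirProd_def by auto
    have c: "u \<in> carrier G" "v \<in> carrier G" "u' \<in> carrier G" "v' \<in> carrier G" using m KSc HSc by auto
    have "phi (z \<otimes>\<^bsub>K \<times>\<times> H\<^esub> w) = u \<otimes> u' \<otimes> (v \<otimes> v')"
      unfolding phi_def zw K_def H_def DirProd_def by simp
    also have "\<dots> = u \<otimes> (u' \<otimes> v) \<otimes> v'" using c by (simp add: m_assoc)
    also have "u' \<otimes> v = v \<otimes> u'" using HKcomm[OF m(2) m(3)] by simp
    also have "u \<otimes> (v \<otimes> u') \<otimes> v' = phi z \<otimes> phi w" unfolding phi_def zw using c by (simp add: m_assoc)
    finally show "phi (z \<otimes>\<^bsub>K \<times>\<times> H\<^esub> w) = phi z \<otimes> phi w" .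
  qed
  have carKH: "carrier (K \<times>\<times> H) = KS \<times> HS" unfolding K_def H_def DirProd_def by simp
  have KH1: "KS \<inter> HS \<subseteq> {\<one>}"
  proof -
    have "KS \<inter> HS \<subseteq> M" using KC HC KS_def CS_def by blast
    then show ?thesis using Hf(3) by blast
  qed
  have inj: "inj_on phi (KS \<times> HS)"
  proof (rule inj_onI)
    fix z w assume z: "z \<in> KS \<times> HS" and w: "w \<in> KS \<times> HS" and e: "phi z = phi w"
    obtain u v u' v' where zw: "z = (u, v)" "w = (u', v')" by (cases z, cases w) auto
    have m: "u \<in> KS" "v \<in> HS" "u' \<in> KS" "v' \<in> HS" using z w zw by auto
    have c: "u \<in> carrier G" "v \<in> carrier G" "u' \<in> carrier G" "v' \<in> carrier G" using m KSc HSc by auto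
    have e': "u \<otimes> v = u' \<otimes> v'" using e zw unfolding phi_def by simp
    have "inv u' \<otimes> u = v' \<otimes> inv v"
    proof -
      have "inv u' \<otimes> u = inv u' \<otimes> (u \<otimes> v) \<otimes> inv v" using c by (simp add: m_assoc)
      also have "\<dots> = inv u' \<otimes> (u' \<otimes> v') \<otimes> inv v" using e' by simp
      also have "\<dots> = v' \<otimes> inv v" using c by (simp add: m_assoc)
      finally show ?thesis .
    qed
    moreover have "inv u' \<otimes> u \<in> KS"
      using subgroup.m_closed[OF Kp(1) subgroup.m_inv_closed[OF Kp(1)]] m KS_def by simp
    moreover have "v' \<otimes> inv v \<in> HS"
      using subgroup.m_closed[OF Hsub _ subgroup.m_inv_closed[OF Hsub]] m by simp
    ultimately have "inv u' \<otimes> u = \<one>" using KH1 by auto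
    then have uu: "u = u'" using c by (metis inv_equality inv_inv inv_closed)
    then have "v = v'" using e' c by (metis l_cancel)
    then show "z = w" using uu zw by simp
  qed
  have surj: "phi ` (KS \<times> HS) = carrier G"
  proof
    show "phi ` (KS \<times> HS) \<subseteq> carrier G" unfolding phi_def using KSc HSc by auto
    show "carrier G \<subseteq> phi ` (KS \<times> HS)"
    proof
      fix s assume s: "s \<in> carrier G"
      obtain y c where yc: "y \<in> KS" "c \<in> CS" "s = y \<otimes> c" using dec s KS_def CS_def by blast
      have "c \<in> generate G (M \<union> set rs)" using yc rs(3) by simp
      then obtain m v where mv: "m \<in> M" "v \<in> HS" "c = m \<otimes> v" using MH_decomp[OF rsc] HS_def by blast
      have c: "y \<in> carrier G" "m \<in> carrier G" "v \<in> carrier G" using yc mv KSc Mc HSc by auto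
      have "s = (y \<otimes> m) \<otimes> v" using yc mv c by (simp add: m_assoc)
      moreover have "y \<otimes> m \<in> KS" using subgroup.m_closed[OF Kp(1)] yc(1) mv(1) Kp(2) KS_def by blast
      ultimately have "s = phi (y \<otimes> m, v)" "(y \<otimes> m, v) \<in> KS \<times> HS" unfolding phi_def using mv by auto
      then show "s \<in> phi ` (KS \<times> HS)" by blast
    qed
  qed
  have "phi \<in> iso (K \<times>\<times> H) G" unfolding iso_def bij_betw_def using hom inj surj carKH by simp
  then have "K \<times>\<times> H \<cong> G" unfolding is_iso_def by blast
  then have "G \<cong> K \<times>\<times> H" using group.iso_sym[OF DirProd_group[OF grK grH]] by blast
  then show ?thesis using isG eaH unfolding K_def H_def by blast
qed

end


context qc begin
lemma Omega_a:
  assumes a: "a \<in> M" "a [^] p = \<one>" "a \<noteq> \<one>" and m: "m \<in> M" "m [^] p = \<one>"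
  shows "\<exists>t<p. m = a [^] t"
proof -
  have ac: "a \<in> carrier G" using a Mc by blast
  have "ord a dvd p" using pow_eq_id[OF ac] a by blast
  moreover have "ord a \<noteq> 1" using ord_eq_1[OF ac] a by simp
  ultimately have oa: "ord a = p" using p by (metis prime_nat_iff)
  let ?A = "(\<lambda>t. a [^] t) ` {0 .. ord a - 1}"
  let ?O = "{m \<in> M. m [^] (p ^ 1) = \<one>}"
  have cA: "card ?A = p" using card_image[OF ord_inj[OF ac]] oa p1 by simp
  have AO: "?A \<subseteq> ?O"
  proof
    fix y assume "y \<in> ?A"
    then obtain t :: nat where y: "y = a [^] t" by blast
    have "y \<in> M" using y sub_pow_closed[OF Msub a(1)] by simp
    moreover have "y [^] (p ^ 1) = \<one>" using y ac a(2) by (simp add: nat_pow_pow mult.commute[of t p] nat_pow_pow[symmetric])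
    ultimately show "y \<in> ?O" by blast
  qed
  have fO: "finite ?O" and cO: "card ?O \<le> p" using Omega_fin[of 1] by auto
  have "?A = ?O" using card_subset_eq[OF fO AO] cA cO card_mono[OF fO AO] by simp
  moreover have "m \<in> ?O" using m by simp
  ultimately obtain t where "t \<in> {0 .. ord a - 1}" "m = a [^] t" by blast
  then show ?thesis using oa p1 by (intro exI[of _ t]) auto
qed
end

context group begin
lemma main_grp:
  assumes "Factorial_Ring.prime p"
    and "nilpotent_group G"
    and "M \<lhd> G"
    and "quasi_cyclic_subgroup p G M"
    and "is_bottom G M"
    and "elementary_abelian p (G Mod M)"
  shows "\<exists>k l KS HS. is_G_k p k (G\<lparr>carrier := KS\<rparr>) \<and> elementary_abelian_rank p l (G\<lparr>carrier := HS\<rparr>)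
     \<and> G \<cong> G\<lparr>carrier := KS\<rparr> \<times>\<times> G\<lparr>carrier := HS\<rparr>"
proof -
  note pr = assms(1) and gr = is_group and nilp = assms(2) and nor = assms(3)
    and qcs = assms(4) and bot = assms(5) and ea = assms(6)
  have Msub: "subgroup M G" and Mqc: "G\<lparr>carrier := M\<rparr> \<cong> prufer_group p"
    using qcs unfolding quasi_cyclic_subgroup_def by auto
  obtain f where f: "f \<in> iso (G\<lparr>carrier := M\<rparr>) (prufer_group p)" using Mqc unfolding is_iso_def by blast
  interpret qc G p M f using gr pr Msub f by (simp add: qc_def qc_axioms_def)
  have dab: "divisible_abelian_subgroup G M" using bot unfolding is_bottom_def by blast
  have Mcomm: "\<And>x y. x \<in> M \<Longrightarrow> y \<in> M \<Longrightarrow> x \<otimes> y = y \<otimes> x"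
    using dab unfolding divisible_abelian_subgroup_def by blast
  have Mdiv: "\<forall>x\<in>M. \<forall>n::nat. n > 0 \<longrightarrow> (\<exists>y\<in>M. y [^] n = x)"
    using dab unfolding divisible_abelian_subgroup_def by blast
  have nil: "\<exists>n. lower_central G n = {\<one>}" using nilp unfolding nilpotent_group_def by blast
  interpret qcn G p M f using nor Mcomm Mdiv nil qc_axioms by (simp add: qcn_def qcn_axioms_def)
  interpret N: normal M G by (rule nor)
  have cgM: "comm_group (G Mod M)" and finMod: "finite (carrier (G Mod M))"
    and powMod: "\<forall>x\<in>carrier (G Mod M). x [^]\<^bsub>G Mod M\<^esub> p = \<one>\<^bsub>G Mod M\<^esub>"
    using ea unfolding elementary_abelian_def by auto
  have cosc: "M #> x \<in> carrier (G Mod M)" if "x \<in> carrier G" for x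
    using that unfolding carrier_FactGroup by blast
  have commZ: "commutator G x y \<in> M" if x: "x \<in> carrier G" and y: "y \<in> carrier G" for x y
  proof -
    have "(M #> x) \<otimes>\<^bsub>G Mod M\<^esub> (M #> y) = (M #> y) \<otimes>\<^bsub>G Mod M\<^esub> (M #> x)"
    proof -
      interpret CM: comm_group "G Mod M" by (rule cgM)
      show ?thesis by (rule CM.m_comm[OF cosc[OF x] cosc[OF y]])
    qed
    then have "M #> (x \<otimes> y) = M #> (y \<otimes> x)" using N.rcos_sum x y by simp
    then have "x \<otimes> y \<in> M #> (y \<otimes> x)" using repr_independenceD[OF Msub, of "x \<otimes> y" "y \<otimes> x"] x y by simp
    then have "(x \<otimes> y) \<otimes> inv (y \<otimes> x) \<in> M"
      using subgroup.rcos_module_imp[OF Msub is_group, of "y \<otimes> x"] x y by simp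
    moreover have "commutator G x y = (x \<otimes> y) \<otimes> inv (y \<otimes> x)"
      unfolding commutator_def using x y by (simp add: inv_mult_group m_assoc)
    ultimately show ?thesis by simp
  qed
  have powM: "x [^] p \<in> M" if x: "x \<in> carrier G" for x
  proof -
    have "(M #> x) [^]\<^bsub>G Mod M\<^esub> p = M" using powMod cosc[OF x] by simp
    then have "M #> (x [^] p) = M" using N.FactGroup_pow[OF x] by simp
    moreover have "x [^] p \<in> M #> (x [^] p)" using rcos_self[OF _ Msub] x by simp
    ultimately show ?thesis by simp
  qed
  have finM: "finite {M #> x | x. x \<in> carrier G}"
  proof -
    have "{M #> x | x. x \<in> carrier G} = carrier (G Mod M)" unfolding carrier_FactGroup by blast
    then show ?thesis using finMod by simp
  qed
  obtain a where a: "a \<in> M" "a [^] p = \<one>" "a \<noteq> \<one>" using exists_a by blast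
  have Zcent: "\<And>z g. z \<in> M \<Longrightarrow> g \<in> carrier G \<Longrightarrow> z \<otimes> g = g \<otimes> z" using M_central by blast
  have Msc: "M \<subseteq> carrier G" by (rule subgroup.subset[OF Msub])
  have cg: "cgrp G M" unfolding cgrp_def cgrp_axioms_def
  proof (intro conjI allI impI)
    show "group G" by (rule is_group)
    show "M \<subseteq> carrier G" by (rule Msc)
  next
    fix z g assume "z \<in> M" "g \<in> carrier G" then show "z \<otimes> g = g \<otimes> z" by (rule Zcent)
  next
    fix x y assume "x \<in> carrier G" "y \<in> carrier G" then show "commutator G x y \<in> M" by (rule commZ)
  qed
  have ca: "chern_axioms G M p a" unfolding chern_axioms_def
    using pr Msub Mdiv powM finM a Omega_a[OF a] by blast
  interpret chern G M p a using cg ca by (simp add: chern_def)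
  obtain k l KS HS where r: "is_G_k p k (G\<lparr>carrier := KS\<rparr>)" "elementary_abelian_rank p l (G\<lparr>carrier := HS\<rparr>)"
    "G \<cong> G\<lparr>carrier := KS\<rparr> \<times>\<times> G\<lparr>carrier := HS\<rparr>" using chern_main[OF Mqc] by blast
  show ?thesis using r by blast
qed
end

theorem proposition3p1:
  fixes G :: "'a monoid" and p :: nat and M :: "'a set"
  assumes "Factorial_Ring.prime p"
    and "group G"
    and "nilpotent_group G"
    and "M \<lhd> G"
    and "quasi_cyclic_subgroup p G M"
    and "is_bottom G M"
    and "elementary_abelian p (G Mod M)"
  shows "\<exists>k l. \<exists>(K :: 'a monoid) (H :: 'a monoid).
           is_G_k p k K \<and> elementary_abelian_rank p l H \<and> G \<cong> K \<times>\<times> H"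
proof -
  obtain k l KS HS where r: "is_G_k p k (G\<lparr>carrier := KS\<rparr>)" "elementary_abelian_rank p l (G\<lparr>carrier := HS\<rparr>)"
    "G \<cong> G\<lparr>carrier := KS\<rparr> \<times>\<times> G\<lparr>carrier := HS\<rparr>"
    using group.main_grp[OF assms(2) assms(1) assms(3-7)] by blast
  show ?thesis using r by blast
qed



end
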